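(* Let $n\ge 1$, let $U$ be a unitary on $n$ qubits (the compute qubits), let $\rho$ be an arbitrary $n$-qubit density matrix, and let $\mathcal{E}(\sigma)=\sum_i E_i\sigma E_i^\dagger$ be an arbitrary noise map acting on the compute qubits only. Then there exist $m\ge 1$ and checks $\tilde C_{1,k},\tilde C_{2,k}$ ($k=1,\dots,m$), i.e. $n$-qubit unitaries satisfying $\tilde C_{2,k}\,U\,\tilde C_{1,k}=U$ for every $k$, such that, whenever the probability of obtaining outcome $0$ on all $m$ ancillas in the $m$-layer Pauli check sandwiching protocol (with noise $\mathcal{E}$ acting immediately after $U$) is nonzero, the postselected state $\rho_m$ of the compute qubits satisfies $F(\rho_m,U\rho U^\dagger)=1$.
   Context: The $m$-layer Pauli check sandwiching protocol: for each $k$, let $C_{j,k}=\tilde C_{j,k}\otimes|1\rangle\langle 1|_k+\mathbb{I}\otimes|0\rangle\langle 0|_k$ ($j=1,2$) be the controlled unitary with control on ancilla $k$ and target the compute qubits. Start with the compute qubits in $\rho$ and $m$ ancillas in $|0\rangle$; apply a Hadamard to every ancilla; apply $C_{1,m},\dots,C_{1,1}$ (in this order); apply $U$ to the compute qubits; apply the noise map $\mathcal{E}$ to the compute qubits; apply $C_{2,1},\dots,C_{2,m}$ (in this order); apply a Hadamard to every ancilla; measure all ancillas in the computational basis and keep only the runs in which every ancilla gives outcome $0$. The postselected state $\rho_m$ is the (renormalized) resulting state of the compute qubits. Fidelity is $F(\rho,\omega)=\left(\operatorname{tr}\sqrt{\sqrt{\rho}\,\omega\sqrt{\rho}}\right)^2$.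 *)

theory Defs
  imports "Jordan_Normal_Form.Schur_Decomposition"
begin

abbreviation dag :: "complex mat \<Rightarrow> complex mat" where
  "dag A \<equiv> mat_adjoint A"

definition mtrace :: "complex mat \<Rightarrow> complex" where
  "mtrace A = (\<Sum>i<dim_row A. A $$ (i, i))"

definition unitary_mat :: "nat \<Rightarrow> complex mat \<Rightarrow> bool" where
  "unitary_mat d U \<longleftrightarrow> U \<in> carrier_mat d d \<and> dag U * U = 1\<^sub>m d \<and> U * dag U = 1\<^sub>m d"

definition psd_mat :: "nat \<Rightarrow> complex mat \<Rightarrow> bool" where
  "psd_mat d A \<longleftrightarrow> A \<in> carrier_mat d d \<and> dag A = A \<and>
     (\<forall>v \<in> carrier_vec d. 0 \<le> Re ((A *\<^sub>v v) \<bullet>c v))"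

definition density_mat :: "nat \<Rightarrow> complex mat \<Rightarrow> bool" where
  "density_mat d \<rho> \<longleftrightarrow> psd_mat d \<rho> \<and> mtrace \<rho> = 1"

definition msqrt :: "complex mat \<Rightarrow> complex mat" where
  "msqrt A = (THE B. psd_mat (dim_row A) B \<and> B * B = A)"

definition fidelity :: "complex mat \<Rightarrow> complex mat \<Rightarrow> real" where
  "fidelity \<rho> \<omega> = (Re (mtrace (msqrt (msqrt \<rho> * \<omega> * msqrt \<rho>)))) ^ 2"

text \<open>A joint state of the m ancillas and the compute qubits (dimension d = 2^n) is
represented in block form: an ancilla bit string is a function x :: nat \<Rightarrow> bool
(ancilla k is bit x k, k = 1..m), and the joint operator is
Sum over x,y of |x><y| (ancilla part) tensor B x y (compute part). Every operator on
ancillas tensor compute qubits has this form; the operations below are exactly the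
actions of the protocol's operators on this representation.\<close>

type_synonym block = "(nat \<Rightarrow> bool) \<Rightarrow> (nat \<Rightarrow> bool) \<Rightarrow> complex mat"

(* compute qubits in rho, all ancillas in |0> *)
definition pcs_init :: "nat \<Rightarrow> complex mat \<Rightarrow> block" where
  "pcs_init d \<rho> = (\<lambda>x y. if x = (\<lambda>_. False) \<and> y = (\<lambda>_. False) then \<rho> else 0\<^sub>m d d)"

definition hadamard_entry :: "bool \<Rightarrow> bool \<Rightarrow> complex" where
  "hadamard_entry a b = (if a \<and> b then -1 else 1) / complex_of_real (sqrt 2)"

(* conjugation of the joint state by a Hadamard on ancilla k *)
definition pcs_hadamard :: "nat \<Rightarrow> block \<Rightarrow> block" where
  "pcs_hadamard k B = (\<lambda>x y.
      (hadamard_entry (x k) False * hadamard_entry (y k) False) \<cdot>\<^sub>m B (x(k := False)) (y(k := False))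
    + (hadamard_entry (x k) False * hadamard_entry (y k) True) \<cdot>\<^sub>m B (x(k := False)) (y(k := True))
    + (hadamard_entry (x k) True * hadamard_entry (y k) False) \<cdot>\<^sub>m B (x(k := True)) (y(k := False))
    + (hadamard_entry (x k) True * hadamard_entry (y k) True) \<cdot>\<^sub>m B (x(k := True)) (y(k := True)))"

(* conjugation by the controlled unitary C tensor |1><1|_k + I tensor |0><0|_k *)
definition pcs_controlled :: "nat \<Rightarrow> nat \<Rightarrow> complex mat \<Rightarrow> block \<Rightarrow> block" where
  "pcs_controlled d k C B = (\<lambda>x y.
      (if x k then C else 1\<^sub>m d) * B x y * (if y k then dag C else 1\<^sub>m d))"

definition pcs_unitary :: "complex mat \<Rightarrow> block \<Rightarrow> block" where
  "pcs_unitary U B = (\<lambda>x y. U * B x y * dag U)"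

definition kraus_apply :: "nat \<Rightarrow> complex mat list \<Rightarrow> complex mat \<Rightarrow> complex mat" where
  "kraus_apply d Es \<sigma> = foldr (\<lambda>E acc. E * \<sigma> * dag E + acc) Es (0\<^sub>m d d)"

definition pcs_noise :: "nat \<Rightarrow> complex mat list \<Rightarrow> block \<Rightarrow> block" where
  "pcs_noise d Es B = (\<lambda>x y. kraus_apply d Es (B x y))"

definition pcs_hadamard_all :: "nat \<Rightarrow> block \<Rightarrow> block" where
  "pcs_hadamard_all m B = fold pcs_hadamard [1..<Suc m] B"

(* the full circuit, before measurement; fold applies list elements in order, so
   C_{1,m}, ..., C_{1,1} and then C_{2,1}, ..., C_{2,m} *)
definition pcs_circuit :: "nat \<Rightarrow> nat \<Rightarrow> (nat \<Rightarrow> complex mat) \<Rightarrow> (nat \<Rightarrow> complex mat)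
    \<Rightarrow> complex mat \<Rightarrow> complex mat list \<Rightarrow> complex mat \<Rightarrow> block" where
  "pcs_circuit d m C1 C2 U Es \<rho> =
     pcs_hadamard_all m
      (fold (\<lambda>k. pcs_controlled d k (C2 k)) [1..<Suc m]
        (pcs_noise d Es
          (pcs_unitary U
            (fold (\<lambda>k. pcs_controlled d k (C1 k)) (rev [1..<Suc m])
              (pcs_hadamard_all m (pcs_init d \<rho>))))))"

(* unnormalised compute state after projecting every ancilla onto |0> *)
definition pcs_postselected_unnorm :: "nat \<Rightarrow> nat \<Rightarrow> (nat \<Rightarrow> complex mat) \<Rightarrow> (nat \<Rightarrow> complex mat)
    \<Rightarrow> complex mat \<Rightarrow> complex mat list \<Rightarrow> complex mat \<Rightarrow> complex mat" where
  "pcs_postselected_unnorm d m C1 C2 U Es \<rho> =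
     pcs_circuit d m C1 C2 U Es \<rho> (\<lambda>_. False) (\<lambda>_. False)"

definition pcs_success_prob :: "nat \<Rightarrow> nat \<Rightarrow> (nat \<Rightarrow> complex mat) \<Rightarrow> (nat \<Rightarrow> complex mat)
    \<Rightarrow> complex mat \<Rightarrow> complex mat list \<Rightarrow> complex mat \<Rightarrow> real" where
  "pcs_success_prob d m C1 C2 U Es \<rho> = Re (mtrace (pcs_postselected_unnorm d m C1 C2 U Es \<rho>))"

definition pcs_postselected :: "nat \<Rightarrow> nat \<Rightarrow> (nat \<Rightarrow> complex mat) \<Rightarrow> (nat \<Rightarrow> complex mat)
    \<Rightarrow> complex mat \<Rightarrow> complex mat list \<Rightarrow> complex mat \<Rightarrow> complex mat" where
  "pcs_postselected d m C1 C2 U Es \<rho> =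
     complex_of_real (1 / pcs_success_prob d m C1 C2 U Es \<rho>) \<cdot>\<^sub>m pcs_postselected_unnorm d m C1 C2 U Es \<rho>"

end

theory Submission
  imports Defs
begin

lemma dag_carrier[simp]: "dag A \<in> carrier_mat (dim_col A) (dim_row A)"
  unfolding mat_adjoint_def by (auto simp: mat_of_rows_def)

lemma dag_dims[simp]: "dim_row (dag A) = dim_col A" "dim_col (dag A) = dim_row A"
  unfolding mat_adjoint_def by (auto simp: mat_of_rows_def)

lemma dag_index[simp]: "i < dim_col A \<Longrightarrow> j < dim_row A \<Longrightarrow> dag A $$ (i,j) = cnj (A $$ (j,i))"
  unfolding mat_adjoint_def by (auto simp: mat_of_rows_def)

lemma dag_carrierI[simp]: "A \<in> carrier_mat n m \<Longrightarrow> dag A \<in> carrier_mat m n"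
  by (metis carrier_matD dag_carrier)

lemma dag_dag[simp]: "dag (dag A) = A"
  by (rule eq_matI, auto)

lemma dag_mult: assumes "A \<in> carrier_mat n k" "B \<in> carrier_mat k m"
  shows "dag (A * B) = dag B * dag A"
  using assms by (intro eq_matI) (auto simp: scalar_prod_def intro!: sum.cong)

lemma dag_one[simp]: "dag (1\<^sub>m n) = 1\<^sub>m n"
  by (rule eq_matI, auto)

lemma dag_zero[simp]: "dag (0\<^sub>m n m) = 0\<^sub>m m n"
  by (rule eq_matI, auto)

lemma dag_smult: "dag (c \<cdot>\<^sub>m A) = cnj c \<cdot>\<^sub>m dag A"
  by (rule eq_matI, auto)

lemma dag_add: assumes "A \<in> carrier_mat n m" "B \<in> carrier_mat n m"
  shows "dag (A + B) = dag A + dag B"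
  using assms by (intro eq_matI) auto

lemma mult_index: assumes "A \<in> carrier_mat n k" "B \<in> carrier_mat k m" "i < n" "j < m"
  shows "(A * B) $$ (i,j) = (\<Sum>l<k. A $$ (i,l) * B $$ (l,j))"
  using assms by (auto simp: scalar_prod_def atLeast0LessThan intro!: sum.cong)

definition diagm :: "nat \<Rightarrow> (nat \<Rightarrow> complex) \<Rightarrow> complex mat" where
  "diagm n g = mat n n (\<lambda>(i,j). if i = j then g i else 0)"

lemma diagm_carrier[simp]: "diagm n g \<in> carrier_mat n n"
  and diagm_dims[simp]: "dim_row (diagm n g) = n" "dim_col (diagm n g) = n"
  and diagm_index[simp]: "i < n \<Longrightarrow> j < n \<Longrightarrow> diagm n g $$ (i,j) = (if i = j then g i else 0)"
  unfolding diagm_def by auto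

lemma mult_diagm_index: assumes "M \<in> carrier_mat n n" "i < n" "j < n"
  shows "(M * diagm n g) $$ (i,j) = M $$ (i,j) * g j"
proof -
  have "(M * diagm n g) $$ (i,j) = (\<Sum>l<n. M $$ (i,l) * diagm n g $$ (l,j))"
    by (rule mult_index) (use assms in auto)
  also have "\<dots> = (\<Sum>l<n. M $$ (i,l) * (if l = j then g l else 0))"
    using assms by (intro sum.cong refl) simp
  also have "\<dots> = M $$ (i,j) * g j" using assms(3)
    by (simp add: if_distrib[of "\<lambda>x. M $$ (i, _) * x"] sum.delta cong: if_cong)
  finally show ?thesis .
qed

lemma conj_diag_index: assumes M: "M \<in> carrier_mat n n" and ij: "i < n" "j < n"
  shows "(M * diagm n g * dag M) $$ (i,j) = (\<Sum>k<n. M $$ (i,k) * g k * cnj (M $$ (j,k)))"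
proof -
  have "(M * diagm n g * dag M) $$ (i,j) = (\<Sum>k<n. (M * diagm n g) $$ (i,k) * dag M $$ (k,j))"
    by (rule mult_index) (use assms in auto)
  also have "\<dots> = (\<Sum>k<n. M $$ (i,k) * g k * cnj (M $$ (j,k)))"
    using assms by (intro sum.cong refl) (simp add: mult_diagm_index del: index_mult_mat)
  finally show ?thesis .
qed

lemma delta_sum1[simp]: assumes "j < (n::nat)" shows "(\<Sum>l<n. (if l = j then f l else 0)) = (f j :: complex)"
  using assms by (subst sum.delta) auto

lemma householder:
  assumes n: "n > 0" and y: "y \<in> carrier_vec n" and norm: "(\<Sum>i<n. y$i * cnj (y$i)) = 1"
    and y0: "cnj (y$0) = y$0"
  shows "\<exists>W. unitary_mat n W \<and> (\<forall>i<n. W $$ (i,0) = y $ i)"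
proof -
  define u where "u = (\<lambda>i. (if i = 0 then 1 else 0) - y$i)"
  define N where "N = (\<Sum>l<n. u l * cnj (u l))"
  define c where "c = 2 / N"
  define W where "W = mat n n (\<lambda>(i,j). (if i = j then 1 else 0) - c * u i * cnj (u j))"
  have W: "W \<in> carrier_mat n n" unfolding W_def by auto
  have cN: "c * c * N = 2 * c" unfolding c_def by (cases "N = 0") auto
  have cnjN: "cnj N = N" unfolding N_def by (simp add: mult.commute)
  have cc: "cnj c = c" unfolding c_def using cnjN by simp
  have Wh: "dag W = W"
    by (rule eq_matI) (auto simp: W_def cc)
  have WW: "W * W = 1\<^sub>m n"
  proof (rule eq_matI)
    fix i j assume i: "i < dim_row (1\<^sub>m n)" and j: "j < dim_col (1\<^sub>m n)"
    hence i: "i < n" and j: "j < n" by auto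
    have "(W * W) $$ (i,j) = (\<Sum>l<n. W $$ (i,l) * W $$ (l,j))"
      by (rule mult_index[OF W W i j])
    also have "\<dots> = (\<Sum>l<n. (if l = i then (if l = j then 1 else 0) - c * u i * cnj (u j) else 0)
         - (if l = j then c * u i * cnj (u l) else 0) + (c * c * u i * cnj (u j)) * (u l * cnj (u l)))"
      using i j by (intro sum.cong refl) (auto simp: W_def algebra_simps)
    also have "\<dots> = (if i = j then 1 else 0) - c * u i * cnj (u j) - c * u i * cnj (u j)
        + (c * c * u i * cnj (u j)) * N"
      using i j unfolding N_def
      by (simp add: sum.distrib sum_subtractf sum_distrib_left[symmetric])
    also have "(c * c * u i * cnj (u j)) * N = (c * c * N) * (u i * cnj (u j))"
      by (simp add: algebra_simps)
    also have "(if i = j then 1 else 0) - c * u i * cnj (u j) - c * u i * cnj (u j) +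
        (c * c * N) * (u i * cnj (u j)) = (if i = j then 1 else 0)"
      unfolding cN by (simp add: algebra_simps)
    finally show "(W * W) $$ (i,j) = 1\<^sub>m n $$ (i,j)" using i j by simp
  qed (use W in auto)
  have unit: "unitary_mat n W" unfolding unitary_mat_def Wh using W WW by simp
  have N2: "N = 2 - 2 * y$0"
  proof -
    have "N = (\<Sum>l<n. (if l = 0 then 1 - y$l - cnj (y$l) else 0) + y$l * cnj (y$l))"
      unfolding N_def u_def by (intro sum.cong refl) (auto simp: algebra_simps)
    also have "\<dots> = 2 - 2 * y$0" using n norm y0 by (simp add: sum.distrib)
    finally show ?thesis .
  qed
  have col: "W $$ (i,0) = y $ i" if i: "i < n" for i
  proof (cases "y$0 = 1")
    case True
    hence N0: "N = 0" using N2 by simp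
    have "(\<Sum>l<n. (cmod (u l))^2) = Re N" unfolding N_def
      by (simp add: complex_norm_square[symmetric] del: of_real_power)
    hence "(\<Sum>l<n. (cmod (u l))^2) = 0" using N0 by simp
    hence "\<forall>l\<in>{..<n}. (cmod (u l))^2 = 0" by (subst (asm) sum_nonneg_eq_0_iff) auto
    hence "u i = 0" using i by auto
    thus ?thesis using i n unfolding W_def u_def by (auto split: if_splits)
  next
    case False
    have "c * cnj (u 0) = 1" unfolding c_def N2 u_def using False y0
      by (simp add: field_simps)
    hence "W $$ (i,0) = (if i = 0 then 1 else 0) - u i" using i n unfolding W_def
      by (simp add: mult.assoc mult.left_commute[of _ "u i"])
    thus ?thesis unfolding u_def by simp
  qed
  show ?thesis using unit col by blast
qed

lemma unitaryI_left: assumes "V \<in> carrier_mat n n" "dag V * V = 1\<^sub>m n"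
  shows "unitary_mat n V"
  using assms mat_mult_left_right_inverse[of "dag V" n V] unfolding unitary_mat_def by auto

lemma unitary_carrier: "unitary_mat n V \<Longrightarrow> V \<in> carrier_mat n n"
  unfolding unitary_mat_def by auto

lemma unitary_dag: "unitary_mat n V \<Longrightarrow> unitary_mat n (dag V)"
  unfolding unitary_mat_def by auto

lemma unitary_mult: assumes A: "unitary_mat n A" and B: "unitary_mat n B"
  shows "unitary_mat n (A * B)"
proof (rule unitaryI_left)
  have Ac: "A \<in> carrier_mat n n" and Bc: "B \<in> carrier_mat n n" using A B unitary_carrier by auto
  show "A * B \<in> carrier_mat n n" using Ac Bc by auto
  have dA: "dag A \<in> carrier_mat n n" and dB: "dag B \<in> carrier_mat n n" using Ac Bc by auto
  have "dag (A * B) * (A * B) = dag B * dag A * (A * B)" by (simp add: dag_mult[OF Ac Bc])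
  also have "\<dots> = dag B * (dag A * (A * B))" using dA dB Ac Bc by (simp add: assoc_mult_mat[of _ n n _ n _ n])
  also have "dag A * (A * B) = (dag A * A) * B" using dA Ac Bc by (simp add: assoc_mult_mat[of _ n n _ n _ n])
  also have "\<dots> = B" using A Bc unfolding unitary_mat_def by auto
  also have "dag B * B = 1\<^sub>m n" using B unfolding unitary_mat_def by auto
  finally show "dag (A * B) * (A * B) = 1\<^sub>m n" .
qed

lemma eigen_exists: fixes A :: "complex mat"
  assumes A: "A \<in> carrier_mat n n" and n: "n > 0"
  shows "\<exists>e v. v \<in> carrier_vec n \<and> v \<noteq> 0\<^sub>v n \<and> A *\<^sub>v v = e \<cdot>\<^sub>v v"
proof -
  obtain as where cp: "char_poly A = (\<Prod>a\<leftarrow>as. [:- a, 1:])" and len: "length as = n"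
    using char_poly_factorized[OF A] by blast
  then obtain a rest where as: "as = a # rest" using n by (cases as) auto
  have "poly (char_poly A) a = 0" unfolding cp as by simp
  hence "eigenvalue A a" using eigenvalue_root_char_poly[OF A] by simp
  hence "eigenvector A (find_eigenvector A a) a" using find_eigenvector[OF A] by simp
  thus ?thesis unfolding eigenvector_def using A by auto
qed

lemma unit_eigen_exists: fixes A :: "complex mat"
  assumes A: "A \<in> carrier_mat n n" and n: "n > 0"
  shows "\<exists>e y. y \<in> carrier_vec n \<and> (\<Sum>i<n. y$i * cnj (y$i)) = 1 \<and> cnj (y$0) = y$0
     \<and> A *\<^sub>v y = e \<cdot>\<^sub>v y"
proof -
  obtain e v where v: "v \<in> carrier_vec n" and v0: "v \<noteq> 0\<^sub>v n" and ev: "A *\<^sub>v v = e \<cdot>\<^sub>v v"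
    using eigen_exists[OF A n] by blast
  define S where "S = (\<Sum>i<n. (cmod (v$i))^2)"
  obtain k where k: "k < n" "v $ k \<noteq> 0" using v v0 by (metis eq_vecI carrier_vecD index_zero_vec)
  have "S > 0" unfolding S_def
    by (rule sum_pos2[of _ k]) (use k in auto)
  define s where "s = sqrt S"
  have s: "s > 0" "s * s = S" using \<open>S > 0\<close> unfolding s_def by (auto simp: real_sqrt_mult_self)
  define g where "g = (if v$0 = 0 then 1 else cnj (v$0) / cmod (v$0)) / complex_of_real s"
  define y where "y = g \<cdot>\<^sub>v v"
  have y: "y \<in> carrier_vec n" unfolding y_def using v by auto
  have yi: "y $ i = g * v $ i" if "i < n" for i unfolding y_def using v that by auto
  have gg: "g * cnj g = 1 / complex_of_real S"
  proof (cases "v$0 = 0")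
    case True thus ?thesis unfolding g_def using s by (simp flip: s(2))
  next
    case False
    have vv: "cnj (v$0) * v$0 = complex_of_real ((cmod (v$0))^2)"
      by (metis complex_norm_square mult.commute)
    have "g * cnj g = (cnj (v$0) * v$0) / (complex_of_real ((cmod (v$0))^2) * complex_of_real (s*s))"
      unfolding g_def using False s by (simp add: field_simps power2_eq_square flip: of_real_mult)
    also have "\<dots> = 1 / complex_of_real S" unfolding vv s(2) using False by simp
    finally show ?thesis .
  qed
  have "(\<Sum>i<n. y$i * cnj (y$i)) = (\<Sum>i<n. (g * cnj g) * (v$i * cnj (v$i)))"
    by (intro sum.cong refl) (auto simp: yi algebra_simps)
  also have "\<dots> = (g * cnj g) * complex_of_real S" unfolding S_def
    by (simp add: sum_distrib_left[symmetric] complex_norm_square del: of_real_power)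
  also have "\<dots> = 1" using gg \<open>S > 0\<close> by simp
  finally have norm: "(\<Sum>i<n. y$i * cnj (y$i)) = 1" .
  have y0: "cnj (y$0) = y$0"
  proof (cases "v$0 = 0")
    case True thus ?thesis using yi[of 0] n by simp
  next
    case False
    have vv: "v $ 0 * cnj (v $ 0) = (complex_of_real (cmod (v $ 0)))^2"
      using complex_norm_square by auto
    have "y$0 = complex_of_real (cmod (v$0) / s)"
      using yi[of 0] n False vv unfolding g_def
      by (simp add: field_simps complex_norm_square[symmetric] power2_eq_square mult.commute)
    thus ?thesis by simp
  qed
  have "A *\<^sub>v y = e \<cdot>\<^sub>v y" unfolding y_def using A v ev
    by (simp add: mult_mat_vec smult_smult_assoc mult.commute)
  thus ?thesis using y norm y0 by blast
qed

lemma mult_index3: assumes "A \<in> carrier_mat n n" "B \<in> carrier_mat n n" "C \<in> carrier_mat n n" "i < n" "j < n"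
  shows "(A * B * C) $$ (i,j) = (\<Sum>k<n. A $$ (i,k) * (\<Sum>l<n. B $$ (k,l) * C $$ (l,j)))"
proof -
  have "(A * B * C) $$ (i,j) = (A * (B * C)) $$ (i,j)" using assms by simp
  also have "\<dots> = (\<Sum>k<n. A $$ (i,k) * (B * C) $$ (k,j))" by (rule mult_index) (use assms in auto)
  also have "\<dots> = (\<Sum>k<n. A $$ (i,k) * (\<Sum>l<n. B $$ (k,l) * C $$ (l,j)))"
    by (intro sum.cong refl arg_cong2[where f = "(*)"] mult_index) (use assms in auto)
  finally show ?thesis .
qed

theorem spectral:
  fixes A :: "complex mat"
  assumes "A \<in> carrier_mat n n" "dag A = A"
  shows "\<exists>V f. unitary_mat n V \<and> A = V * diagm n (\<lambda>i. complex_of_real (f i)) * dag V"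
  using assms
proof (induction n arbitrary: A)
  case 0
  have "A = 1\<^sub>m 0 * diagm 0 (\<lambda>i. 0) * dag (1\<^sub>m 0)"
    using 0 by (intro eq_matI) auto
  moreover have "unitary_mat 0 (1\<^sub>m 0)" unfolding unitary_mat_def by auto
  ultimately show ?case by (intro exI[of _ "1\<^sub>m 0"] exI[of _ "\<lambda>_. 0"]) simp
next
  case (Suc k A)
  define n where "n = Suc k"
  have A: "A \<in> carrier_mat n n" and Ah: "dag A = A" using Suc n_def by auto
  obtain e y where y: "y \<in> carrier_vec n" and ny: "(\<Sum>i<n. y$i * cnj (y$i)) = 1"
     and y0: "cnj (y$0) = y$0" and ev: "A *\<^sub>v y = e \<cdot>\<^sub>v y"
    using unit_eigen_exists[OF A] unfolding n_def by blast
  obtain W where W: "unitary_mat n W" and Wc: "\<forall>i<n. W $$ (i,0) = y $ i"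
    using householder[OF _ y ny y0] unfolding n_def by blast
  have Wcar: "W \<in> carrier_mat n n" using W unitary_carrier by auto
  have dWcar: "dag W \<in> carrier_mat n n" using Wcar by auto
  define A' where "A' = dag W * A * W"
  have A'c: "A' \<in> carrier_mat n n" unfolding A'_def using Wcar A by auto
  have A'h: "dag A' = A'" unfolding A'_def using Wcar A dWcar Ah
    by (simp add: dag_mult[of _ n n _ n] assoc_mult_mat[of _ n n _ n _ n])
  have Ay: "(\<Sum>l<n. A $$ (k',l) * y $ l) = e * y $ k'" if "k' < n" for k'
  proof -
    have "(A *\<^sub>v y) $ k' = e * y $ k'" using ev that y by simp
    moreover have "(A *\<^sub>v y) $ k' = (\<Sum>l<n. A $$ (k',l) * y $ l)"
      using that A y by (auto simp: scalar_prod_def atLeast0LessThan intro!: sum.cong)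
    ultimately show ?thesis by simp
  qed
  have col0: "A' $$ (i,0) = (if i = 0 then e else 0)" if i: "i < n" for i
  proof -
    have "A' $$ (i,0) = (\<Sum>k'<n. dag W $$ (i,k') * (\<Sum>l<n. A $$ (k',l) * W $$ (l,0)))"
      unfolding A'_def by (rule mult_index3) (use dWcar A Wcar i n_def in auto)
    also have "\<dots> = (\<Sum>k'<n. dag W $$ (i,k') * (e * W $$ (k',0)))"
      using Wc Ay n_def by (intro sum.cong refl) auto
    also have "\<dots> = e * (\<Sum>k'<n. dag W $$ (i,k') * W $$ (k',0))"
      by (simp add: sum_distrib_left algebra_simps)
    also have "(\<Sum>k'<n. dag W $$ (i,k') * W $$ (k',0)) = (dag W * W) $$ (i,0)"
      by (rule mult_index[symmetric]) (use dWcar Wcar i n_def in auto)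
    also have "\<dots> = (if i = 0 then 1 else 0)" using W i n_def unfolding unitary_mat_def by auto
    finally show ?thesis by simp
  qed
  have herm: "A' $$ (j,i) = cnj (A' $$ (i,j))" if "i < n" "j < n" for i j
  proof -
    have "A' $$ (j,i) = dag A' $$ (j,i)" using A'h by simp
    also have "\<dots> = cnj (A' $$ (i,j))" using that A'c by simp
    finally show ?thesis .
  qed
  have row0: "A' $$ (0,j) = (if j = 0 then e else 0)" if j: "j < n" for j
  proof (cases "j = 0")
    case True thus ?thesis using col0[of 0] n_def by simp
  next
    case False
    have "A' $$ (0,j) = cnj (A' $$ (j,0))" by (rule herm) (use j n_def in auto)
    thus ?thesis using col0[of j] j False by simp
  qed
  have er: "cnj e = e"
  proof -
    have "A' $$ (0,0) = cnj (A' $$ (0,0))" by (rule herm) (use n_def in auto)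
    thus ?thesis using col0[of 0] n_def by simp
  qed
  define A3 where "A3 = mat k k (\<lambda>(i,j). A' $$ (Suc i, Suc j))"
  have A3c: "A3 \<in> carrier_mat k k" unfolding A3_def by auto
  have A3h: "dag A3 = A3"
  proof (rule eq_matI)
    fix i j assume "i < dim_row A3" "j < dim_col A3"
    hence i: "i < k" and j: "j < k" using A3c by auto
    have "dag A3 $$ (i,j) = cnj (A' $$ (Suc j, Suc i))" using i j A3c by (simp add: A3_def)
    also have "A' $$ (Suc j, Suc i) = cnj (A' $$ (Suc i, Suc j))" by (rule herm) (use i j n_def in auto)
    finally show "dag A3 $$ (i,j) = A3 $$ (i,j)" using i j by (simp add: A3_def)
  qed (use A3c in auto)
  obtain V3 f3 where V3: "unitary_mat k V3" and A3e: "A3 = V3 * diagm k (\<lambda>i. complex_of_real (f3 i)) * dag V3"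
    using Suc.IH[OF A3c A3h] by blast
  have V3c: "V3 \<in> carrier_mat k k" using V3 unitary_carrier by auto
  define V' where "V' = mat n n (\<lambda>(i,j). if i = 0 \<and> j = 0 then 1 else if i = 0 \<or> j = 0 then 0
      else V3 $$ (i - 1, j - 1))"
  have V'c: "V' \<in> carrier_mat n n" unfolding V'_def by auto
  have V'00: "V' $$ (0,0) = 1" unfolding V'_def n_def by simp
  have V'0S: "\<And>b. b < k \<Longrightarrow> V' $$ (0,Suc b) = 0" unfolding V'_def n_def by simp
  have V'S0: "\<And>a. a < k \<Longrightarrow> V' $$ (Suc a,0) = 0" unfolding V'_def n_def by simp
  have V'SS: "\<And>a b. a < k \<Longrightarrow> b < k \<Longrightarrow> V' $$ (Suc a,Suc b) = V3 $$ (a,b)" unfolding V'_def n_def by simp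
  have dV'SS: "\<And>a b. a < k \<Longrightarrow> b < k \<Longrightarrow> dag V' $$ (Suc a,Suc b) = cnj (V3 $$ (b,a))"
    using V'SS V'c unfolding n_def by simp
  have dV'0S: "\<And>b. b < k \<Longrightarrow> dag V' $$ (0,Suc b) = 0" using V'S0 V'c unfolding n_def by simp
  have dV'S0: "\<And>a. a < k \<Longrightarrow> dag V' $$ (Suc a,0) = 0" using V'0S V'c unfolding n_def by simp
  have dV'00: "dag V' $$ (0,0) = 1" using V'00 V'c unfolding n_def by simp
  have V'u: "unitary_mat n V'"
  proof (rule unitaryI_left[OF V'c], rule eq_matI)
    fix i j assume "i < dim_row (1\<^sub>m n)" "j < dim_col (1\<^sub>m n)"
    hence i: "i < n" and j: "j < n" by auto
    have "(dag V' * V') $$ (i,j) = (\<Sum>l<n. dag V' $$ (i,l) * V' $$ (l,j))"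
      by (rule mult_index) (use V'c i j in auto)
    also have "\<dots> = dag V' $$ (i,0) * V' $$ (0,j) + (\<Sum>l<k. dag V' $$ (i,Suc l) * V' $$ (Suc l,j))"
      unfolding n_def by (rule sum.lessThan_Suc_shift)
    also have "\<dots> = 1\<^sub>m n $$ (i,j)"
    proof (cases "i = 0 \<or> j = 0")
      case True
      show ?thesis
      proof (cases "i = 0")
        case True
        have "(\<Sum>l<k. dag V' $$ (i,Suc l) * V' $$ (Suc l,j)) = 0" using True dV'0S by simp
        moreover have "dag V' $$ (i,0) * V' $$ (0,j) = 1\<^sub>m n $$ (i,j)"
        proof (cases j)
          case 0 thus ?thesis using True dV'00 V'00 n_def by simp
        next
          case (Suc b) thus ?thesis using True dV'00 V'0S j n_def by simp
        qed
        ultimately show ?thesis by simp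
      next
        case False
        then obtain a where a: "i = Suc a" by (metis not0_implies_Suc)
        have j0: "j = 0" using False \<open>i = 0 \<or> j = 0\<close> by simp
        have "(\<Sum>l<k. dag V' $$ (i,Suc l) * V' $$ (Suc l,j)) = 0" using j0 V'S0 by simp
        moreover have "dag V' $$ (i,0) = 0" using a i dV'S0 n_def by simp
        ultimately show ?thesis using a j0 i n_def by simp
      qed
    next
      case False
      then obtain i' j' where ij: "i = Suc i'" "j = Suc j'" by (metis not0_implies_Suc)
      have "(\<Sum>l<k. dag V' $$ (i,Suc l) * V' $$ (Suc l,j)) = (\<Sum>l<k. dag V3 $$ (i',l) * V3 $$ (l,j'))"
        using i j ij V3c unfolding n_def by (intro sum.cong refl) (simp add: dV'SS V'SS)
      also have "\<dots> = (dag V3 * V3) $$ (i',j')"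
        by (rule mult_index[symmetric]) (use V3c i j ij n_def in auto)
      also have "\<dots> = 1\<^sub>m k $$ (i',j')" using V3 unfolding unitary_mat_def by simp
      moreover have "dag V' $$ (i,0) = 0" using dV'S0[of i'] i ij n_def by simp
      ultimately show ?thesis using i j ij n_def by simp
    qed
    finally show "(dag V' * V') $$ (i,j) = 1\<^sub>m n $$ (i,j)" .
  qed (use V'c in auto)
  define f where "f = (\<lambda>i. if i = 0 then Re e else f3 (i - 1))"
  have A'e: "A' = V' * diagm n (\<lambda>i. complex_of_real (f i)) * dag V'"
  proof (rule eq_matI)
    fix i j assume "i < dim_row (V' * diagm n (\<lambda>i. complex_of_real (f i)) * dag V')"
      "j < dim_col (V' * diagm n (\<lambda>i. complex_of_real (f i)) * dag V')"
    hence i: "i < n" and j: "j < n" using V'c by auto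
    have "(V' * diagm n (\<lambda>i. complex_of_real (f i)) * dag V') $$ (i,j)
       = (\<Sum>l<n. V' $$ (i,l) * complex_of_real (f l) * cnj (V' $$ (j,l)))"
      by (rule conj_diag_index[OF V'c i j])
    also have "\<dots> = V' $$ (i,0) * complex_of_real (f 0) * cnj (V' $$ (j,0)) +
       (\<Sum>l<k. V' $$ (i,Suc l) * complex_of_real (f (Suc l)) * cnj (V' $$ (j,Suc l)))"
      unfolding n_def by (rule sum.lessThan_Suc_shift)
    also have "\<dots> = A' $$ (i,j)"
    proof (cases "i = 0 \<or> j = 0")
      case True
      have eR: "complex_of_real (Re e) = e" using er by (auto simp: complex_eq_iff)
      show ?thesis
      proof (cases "i = 0")
        case True
        have "(\<Sum>l<k. V' $$ (i,Suc l) * complex_of_real (f (Suc l)) * cnj (V' $$ (j,Suc l))) = 0"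
          using True V'0S by simp
        moreover have "V' $$ (i,0) * complex_of_real (f 0) * cnj (V' $$ (j,0)) = A' $$ (i,j)"
        proof (cases j)
          case 0 thus ?thesis using True V'00 eR col0[of 0] n_def by (simp add: f_def)
        next
          case (Suc b) thus ?thesis using True V'S0 j row0[of j] n_def by simp
        qed
        ultimately show ?thesis by simp
      next
        case False
        then obtain a where a: "i = Suc a" by (metis not0_implies_Suc)
        have j0: "j = 0" using False \<open>i = 0 \<or> j = 0\<close> by simp
        have "(\<Sum>l<k. V' $$ (i,Suc l) * complex_of_real (f (Suc l)) * cnj (V' $$ (j,Suc l))) = 0"
          using j0 V'0S by simp
        moreover have "V' $$ (i,0) = 0" using a i V'S0 n_def by simp
        ultimately show ?thesis using a j0 i col0[of i] n_def by simp
      qed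
    next
      case False
      then obtain i' j' where ij: "i = Suc i'" "j = Suc j'" by (metis not0_implies_Suc)
      have "(\<Sum>l<k. V' $$ (i,Suc l) * complex_of_real (f (Suc l)) * cnj (V' $$ (j,Suc l)))
         = (\<Sum>l<k. V3 $$ (i',l) * complex_of_real (f3 l) * cnj (V3 $$ (j',l)))"
        using i j ij unfolding n_def by (intro sum.cong refl) (simp add: V'SS f_def)
      also have "\<dots> = A3 $$ (i',j')" unfolding A3e
        by (rule conj_diag_index[symmetric, OF V3c]) (use i j ij n_def in auto)
      also have "\<dots> = A' $$ (i,j)" using i j ij n_def unfolding A3_def by auto
      moreover have "V' $$ (i,0) = 0" using V'S0[of i'] i ij n_def by simp
      ultimately show ?thesis by simp
    qed
    finally show "A' $$ (i,j) = (V' * diagm n (\<lambda>i. complex_of_real (f i)) * dag V') $$ (i,j)" by simp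
  qed (use A'c V'c in auto)
  define D where "D = diagm n (\<lambda>i. complex_of_real (f i))"
  have Dc: "D \<in> carrier_mat n n" unfolding D_def by simp
  have "W * A' * dag W = (W * dag W) * A * (W * dag W)"
    unfolding A'_def using Wcar dWcar A by (simp add: assoc_mult_mat[of _ n n _ n _ n] mult_carrier_mat[of _ n n _ n])
  hence AW: "A = W * A' * dag W" using W A unfolding unitary_mat_def by simp
  have "A = (W * V') * D * dag (W * V')"
    unfolding AW A'e D_def[symmetric] using Wcar V'c Dc dWcar
    by (simp add: dag_mult[OF Wcar V'c] assoc_mult_mat[of _ n n _ n _ n] mult_carrier_mat[of _ n n _ n])
  moreover have "unitary_mat n (W * V')" by (rule unitary_mult[OF W V'u])
  ultimately show ?case unfolding D_def n_def by blast
qed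

lemma diagm_mult_index: assumes "M \<in> carrier_mat n n" "i < n" "j < n"
  shows "(diagm n g * M) $$ (i,j) = g i * M $$ (i,j)"
proof -
  have "(diagm n g * M) $$ (i,j) = (\<Sum>l<n. diagm n g $$ (i,l) * M $$ (l,j))"
    by (rule mult_index) (use assms in auto)
  also have "\<dots> = (\<Sum>l<n. (if l = i then g i * M $$ (l,j) else 0))"
    using assms by (intro sum.cong refl) auto
  also have "\<dots> = g i * M $$ (i,j)" using assms by simp
  finally show ?thesis .
qed

lemma diagm_mult: "diagm n g * diagm n h = diagm n (\<lambda>i. g i * h i)"
proof (rule eq_matI)
  fix i j assume "i < dim_row (diagm n (\<lambda>i. g i * h i))" "j < dim_col (diagm n (\<lambda>i. g i * h i))"
  hence ij: "i < n" "j < n" by auto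
  show "(diagm n g * diagm n h) $$ (i,j) = diagm n (\<lambda>i. g i * h i) $$ (i,j)"
    by (subst diagm_mult_index[of "diagm n h" n]) (use ij in auto)
qed auto

lemma mat_vec_index: assumes "M \<in> carrier_mat n n" "v \<in> carrier_vec n" "i < n"
  shows "(M *\<^sub>v v) $ i = (\<Sum>j<n. M $$ (i,j) * v $ j)"
  using assms by (auto simp: scalar_prod_def atLeast0LessThan intro!: sum.cong)

lemma cprod_sum: assumes "v \<in> carrier_vec n" "w \<in> carrier_vec n"
  shows "v \<bullet>c w = (\<Sum>i<n. v $ i * cnj (w $ i))"
  using assms by (auto simp: scalar_prod_def atLeast0LessThan intro!: sum.cong)

lemma adjoint_move: assumes M: "M \<in> carrier_mat n n" and v: "v \<in> carrier_vec n" and w: "w \<in> carrier_vec n"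
  shows "(M *\<^sub>v v) \<bullet>c w = v \<bullet>c (dag M *\<^sub>v w)"
proof -
  have "(M *\<^sub>v v) \<bullet>c w = (\<Sum>i<n. (M *\<^sub>v v) $ i * cnj (w $ i))"
    using assms by (simp add: cprod_sum[of _ n])
  also have "\<dots> = (\<Sum>i<n. (\<Sum>j<n. M $$ (i,j) * v $ j) * cnj (w $ i))"
    using assms by (intro sum.cong refl) (simp add: mat_vec_index[of M n] del: index_mult_mat_vec)
  also have "\<dots> = (\<Sum>j<n. v $ j * cnj (\<Sum>i<n. cnj (M $$ (i,j)) * w $ i))"
    by (simp add: sum_distrib_left sum_distrib_right algebra_simps) (rule sum.swap)
  also have "\<dots> = (\<Sum>j<n. v $ j * cnj ((dag M *\<^sub>v w) $ j))"
    using assms by (intro sum.cong refl) (simp add: mat_vec_index[of "dag M" n] del: index_mult_mat_vec)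
  also have "\<dots> = v \<bullet>c (dag M *\<^sub>v w)"
    by (rule cprod_sum[symmetric]) (use assms mult_mat_vec_carrier[of "dag M" n n w] in auto)
  finally show ?thesis .
qed

lemma psd_conj: assumes A: "psd_mat n A" and U: "U \<in> carrier_mat n n"
  shows "psd_mat n (U * A * dag U)"
proof -
  have Ac: "A \<in> carrier_mat n n" and Ah: "dag A = A" and Aq: "\<forall>v\<in>carrier_vec n. 0 \<le> Re ((A *\<^sub>v v) \<bullet>c v)"
    using A unfolding psd_mat_def by auto
  have dU: "dag U \<in> carrier_mat n n" using U by auto
  have c: "U * A * dag U \<in> carrier_mat n n" using U Ac by auto
  have h: "dag (U * A * dag U) = U * A * dag U"
    using U Ac dU Ah by (simp add: dag_mult[of _ n n _ n] assoc_mult_mat[of _ n n _ n _ n] mult_carrier_mat[of _ n n _ n])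
  have q: "0 \<le> Re (((U * A * dag U) *\<^sub>v v) \<bullet>c v)" if v: "v \<in> carrier_vec n" for v
  proof -
    have "((U * A * dag U) *\<^sub>v v) = U *\<^sub>v (A *\<^sub>v (dag U *\<^sub>v v))"
      using U Ac dU v by (simp add: assoc_mult_mat_vec[of _ n n _ n] mult_carrier_mat[of _ n n _ n] mult_mat_vec_carrier[of _ n n])
    hence "((U * A * dag U) *\<^sub>v v) \<bullet>c v = (A *\<^sub>v (dag U *\<^sub>v v)) \<bullet>c (dag U *\<^sub>v v)"
      using adjoint_move[OF U, of "A *\<^sub>v (dag U *\<^sub>v v)" v] v Ac dU by simp
    thus ?thesis using Aq dU v by simp
  qed
  show ?thesis unfolding psd_mat_def using c h q by blast
qed

lemma psd_diagm: assumes "\<And>i. i < n \<Longrightarrow> f i \<ge> 0"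
  shows "psd_mat n (diagm n (\<lambda>i. complex_of_real (f i)))"
proof -
  have "0 \<le> Re ((diagm n (\<lambda>i. complex_of_real (f i)) *\<^sub>v v) \<bullet>c v)" if v: "v \<in> carrier_vec n" for v
  proof -
    have "(diagm n (\<lambda>i. complex_of_real (f i)) *\<^sub>v v) \<bullet>c v
       = (\<Sum>i<n. complex_of_real (f i) * (v $ i * cnj (v $ i)))"
    proof -
      have "(diagm n (\<lambda>i. complex_of_real (f i)) *\<^sub>v v) \<bullet>c v
         = (\<Sum>i<n. (diagm n (\<lambda>i. complex_of_real (f i)) *\<^sub>v v) $ i * cnj (v $ i))"
        by (rule cprod_sum) (use v mult_mat_vec_carrier[of "diagm n (\<lambda>i. complex_of_real (f i))" n n v] in auto)
      also have "\<dots> = (\<Sum>i<n. (\<Sum>j<n. diagm n (\<lambda>i. complex_of_real (f i)) $$ (i,j) * v $ j) * cnj (v $ i))"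
        using v by (intro sum.cong refl) (simp add: mat_vec_index[of _ n] del: index_mult_mat_vec)
      also have "\<dots> = (\<Sum>i<n. complex_of_real (f i) * (v $ i * cnj (v $ i)))"
      proof (intro sum.cong refl)
        fix i assume i: "i \<in> {..<n}"
        have "(\<Sum>j<n. diagm n (\<lambda>i. complex_of_real (f i)) $$ (i,j) * v $ j)
            = (\<Sum>j<n. if j = i then complex_of_real (f i) * v $ j else 0)"
          using i by (intro sum.cong refl) auto
        also have "\<dots> = complex_of_real (f i) * v $ i" using i by simp
        finally show "(\<Sum>j<n. diagm n (\<lambda>i. complex_of_real (f i)) $$ (i,j) * v $ j) * cnj (v $ i)
            = complex_of_real (f i) * (v $ i * cnj (v $ i))" by simp
      qed
      finally show ?thesis .
    qed
    also have "\<dots> = complex_of_real (\<Sum>i<n. f i * (cmod (v $ i))^2)"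
      by (simp add: complex_norm_square del: of_real_power)
    moreover have "0 \<le> (\<Sum>i<n. f i * (cmod (v $ i))^2)" using assms by (intro sum_nonneg) auto
    ultimately show ?thesis by simp
  qed
  thus ?thesis unfolding psd_mat_def by (auto intro!: eq_matI)
qed

lemma psd_spectral_nonneg:
  assumes A: "psd_mat n A" and V: "unitary_mat n V"
    and Ae: "A = V * diagm n (\<lambda>i. complex_of_real (f i)) * dag V" and i: "i < n"
  shows "f i \<ge> 0"
proof -
  define D where "D = diagm n (\<lambda>i. complex_of_real (f i))"
  have Vc: "V \<in> carrier_mat n n" using V unitary_carrier by auto
  have dVc: "dag V \<in> carrier_mat n n" using Vc by auto
  have Dc: "D \<in> carrier_mat n n" unfolding D_def by simp
  have "dag V * A * dag (dag V) = (dag V * V) * D * (dag V * V)"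
    unfolding Ae D_def[symmetric] using Vc dVc Dc
    by (simp add: assoc_mult_mat[of _ n n _ n _ n] mult_carrier_mat[of _ n n _ n])
  hence "dag V * A * dag (dag V) = D" using V Dc unfolding unitary_mat_def by simp
  hence "psd_mat n D" using psd_conj[OF A dVc] by simp
  hence "0 \<le> Re ((D *\<^sub>v unit_vec n i) \<bullet>c unit_vec n i)" unfolding psd_mat_def by auto
  moreover have "(D *\<^sub>v unit_vec n i) \<bullet>c unit_vec n i = complex_of_real (f i)"
  proof -
    have "(D *\<^sub>v unit_vec n i) \<bullet>c unit_vec n i = (\<Sum>k<n. (D *\<^sub>v unit_vec n i) $ k * cnj (unit_vec n i $ k))"
      by (rule cprod_sum) (use Dc mult_mat_vec_carrier[of D n n "unit_vec n i"] in auto)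
    also have "\<dots> = (\<Sum>k<n. if k = i then (D *\<^sub>v unit_vec n i) $ k else 0)"
      using i by (intro sum.cong refl) auto
    also have "\<dots> = (D *\<^sub>v unit_vec n i) $ i" using i by simp
    also have "\<dots> = (\<Sum>j<n. D $$ (i,j) * unit_vec n i $ j)"
      by (rule mat_vec_index) (use Dc i in auto)
    also have "\<dots> = (\<Sum>j<n. if j = i then complex_of_real (f i) else 0)"
      using i by (intro sum.cong refl) (auto simp: D_def)
    also have "\<dots> = complex_of_real (f i)" using i by simp
    finally show ?thesis .
  qed
  ultimately show ?thesis by simp
qed

lemma psd_sqrt_exists: assumes A: "psd_mat n A"
  shows "\<exists>B. psd_mat n B \<and> B * B = A"
proof -
  have Ac: "A \<in> carrier_mat n n" and Ah: "dag A = A" using A unfolding psd_mat_def by auto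
  obtain V f where V: "unitary_mat n V" and Ae: "A = V * diagm n (\<lambda>i. complex_of_real (f i)) * dag V"
    using spectral[OF Ac Ah] by blast
  have f0: "\<And>i. i < n \<Longrightarrow> f i \<ge> 0" using psd_spectral_nonneg[OF A V Ae] by blast
  define S where "S = diagm n (\<lambda>i. complex_of_real (sqrt (f i)))"
  define B where "B = V * S * dag V"
  have Vc: "V \<in> carrier_mat n n" using V unitary_carrier by auto
  have dVc: "dag V \<in> carrier_mat n n" using Vc by auto
  have Sc: "S \<in> carrier_mat n n" unfolding S_def by simp
  have "psd_mat n B" unfolding B_def S_def by (rule psd_conj[OF psd_diagm Vc]) (use f0 in auto)
  moreover have "B * B = V * S * (dag V * V) * S * dag V"
    unfolding B_def using Vc dVc Sc
    by (simp add: assoc_mult_mat[of _ n n _ n _ n] mult_carrier_mat[of _ n n _ n])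
  moreover have "S * S = diagm n (\<lambda>i. complex_of_real (f i))"
    unfolding S_def diagm_mult using f0
    by (intro eq_matI) (auto simp flip: of_real_mult)
  ultimately have "psd_mat n B \<and> B * B = A"
    using V Vc Sc unfolding Ae unitary_mat_def
    by (simp add: assoc_mult_mat[of _ n n _ n _ n] mult_carrier_mat[of _ n n _ n])
  thus ?thesis by blast
qed

lemma psd_sqrt_unique: assumes B: "psd_mat n B" and C: "psd_mat n C" and BC: "B * B = C * C"
  shows "B = C"
proof -
  have Bc: "B \<in> carrier_mat n n" and Bh: "dag B = B" using B unfolding psd_mat_def by auto
  have Cc: "C \<in> carrier_mat n n" and Ch: "dag C = C" using C unfolding psd_mat_def by auto
  obtain V b where V: "unitary_mat n V" and Be: "B = V * diagm n (\<lambda>i. complex_of_real (b i)) * dag V"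
    using spectral[OF Bc Bh] by blast
  obtain W c where W: "unitary_mat n W" and Ce: "C = W * diagm n (\<lambda>i. complex_of_real (c i)) * dag W"
    using spectral[OF Cc Ch] by blast
  have b0: "\<And>i. i < n \<Longrightarrow> b i \<ge> 0" using psd_spectral_nonneg[OF B V Be] by blast
  have c0: "\<And>i. i < n \<Longrightarrow> c i \<ge> 0" using psd_spectral_nonneg[OF C W Ce] by blast
  define Db where "Db = diagm n (\<lambda>i. complex_of_real (b i))"
  define Dc where "Dc = diagm n (\<lambda>i. complex_of_real (c i))"
  have Vc: "V \<in> carrier_mat n n" using V unitary_carrier by auto
  have dVc: "dag V \<in> carrier_mat n n" using Vc by auto
  have Wc: "W \<in> carrier_mat n n" using W unitary_carrier by auto
  have dWc: "dag W \<in> carrier_mat n n" using Wc by auto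
  have Dbc: "Db \<in> carrier_mat n n" unfolding Db_def by simp
  have Dcc: "Dc \<in> carrier_mat n n" unfolding Dc_def by simp
  define M where "M = dag V * W"
  have Mc: "M \<in> carrier_mat n n" unfolding M_def using dVc Wc by simp
  note simps = assoc_mult_mat[of _ n n _ n _ n] mult_carrier_mat[of _ n n _ n]
  have VV: "dag V * V = 1\<^sub>m n" "V * dag V = 1\<^sub>m n" using V unfolding unitary_mat_def by auto
  have WW: "dag W * W = 1\<^sub>m n" "W * dag W = 1\<^sub>m n" using W unfolding unitary_mat_def by auto
  have "dag V * (B * B) * W = (dag V * V) * Db * (dag V * V) * Db * (dag V * W)"
    unfolding Be Db_def[symmetric] using Vc dVc Wc Dbc by (simp add: simps)
  hence L: "dag V * (B * B) * W = Db * Db * M"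
    unfolding VV M_def using Dbc dVc Wc by (simp add: simps)
  have "dag V * (C * C) * W = (dag V * W) * Dc * (dag W * W) * Dc * (dag W * W)"
    unfolding Ce Dc_def[symmetric] using Vc dVc Wc dWc Dcc by (simp add: simps)
  hence R: "dag V * (C * C) * W = M * (Dc * Dc)"
    unfolding WW M_def using Dcc dVc Wc by (simp add: simps)
  have eq: "Db * Db * M = M * (Dc * Dc)" using L R BC by simp
  have key: "Db * M = M * Dc"
  proof (rule eq_matI)
    fix i j assume "i < dim_row (M * Dc)" "j < dim_col (M * Dc)"
    hence i: "i < n" and j: "j < n" using Mc Dcc by auto
    have "(Db * Db * M) $$ (i,j) = (M * (Dc * Dc)) $$ (i,j)" using eq by simp
    hence "complex_of_real (b i * b i) * M $$ (i,j) = M $$ (i,j) * complex_of_real (c j * c j)"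
      unfolding Db_def Dc_def diagm_mult using i j Mc
      by (simp add: diagm_mult_index[of M n] mult_diagm_index[of M n] del: index_mult_mat)
    hence "M $$ (i,j) = 0 \<or> b i * b i = c j * c j"
      by (metis mult.commute mult_cancel_left of_real_eq_iff)
    hence "M $$ (i,j) = 0 \<or> b i = c j" using b0[OF i] c0[OF j]
      by (metis mult_less_cancel_left_pos mult_less_cancel_right_pos nless_le not_less_iff_gr_or_eq mult_strict_mono')
    hence "complex_of_real (b i) * M $$ (i,j) = M $$ (i,j) * complex_of_real (c j)" by auto
    thus "(Db * M) $$ (i,j) = (M * Dc) $$ (i,j)"
      unfolding Db_def Dc_def using i j Mc
      by (simp add: diagm_mult_index[of M n] mult_diagm_index[of M n] del: index_mult_mat)
  qed (use Mc Dbc Dcc in auto)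
  have "B = V * Db * (dag V * W) * dag W"
    unfolding Be Db_def[symmetric] using Vc dVc Wc dWc Dbc by (simp add: simps WW)
  also have "\<dots> = V * (Db * M) * dag W" unfolding M_def using Vc dVc Wc dWc Dbc by (simp add: simps)
  also have "\<dots> = V * (dag V * W) * Dc * dag W" unfolding key using Vc dVc Wc dWc Dcc by (simp add: simps M_def)
  also have "\<dots> = (V * dag V) * W * Dc * dag W" using Vc dVc Wc dWc Dcc by (simp add: simps)
  also have "\<dots> = C" unfolding Ce Dc_def[symmetric] VV using Wc by simp
  finally show ?thesis .
qed

lemma msqrt_eq: assumes "psd_mat n A" "psd_mat n B" "B * B = A"
  shows "msqrt A = B"
proof -
  have "dim_row A = n" using assms(1) unfolding psd_mat_def by auto
  thus ?thesis unfolding msqrt_def using assms psd_sqrt_unique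
    by (intro the_equality) auto
qed

lemma fidelity_self: assumes "density_mat n \<sigma>" shows "fidelity \<sigma> \<sigma> = 1"
proof -
  have ps: "psd_mat n \<sigma>" and tr: "mtrace \<sigma> = 1" using assms unfolding density_mat_def by auto
  have sc: "\<sigma> \<in> carrier_mat n n" using ps unfolding psd_mat_def by auto
  obtain B where B: "psd_mat n B" and BB: "B * B = \<sigma>" using psd_sqrt_exists[OF ps] by blast
  have Bc: "B \<in> carrier_mat n n" using B unfolding psd_mat_def by auto
  have m1: "msqrt \<sigma> = B" by (rule msqrt_eq[OF ps B BB])
  have "B * \<sigma> * B = \<sigma> * \<sigma>" unfolding BB[symmetric] using Bc
    by (simp add: assoc_mult_mat[of _ n n _ n _ n] mult_carrier_mat[of _ n n _ n])
  hence "msqrt (B * \<sigma> * B) = \<sigma>" using msqrt_eq[OF _ ps] psd_conj[OF ps Bc] B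
    unfolding psd_mat_def by (metis)
  thus ?thesis unfolding fidelity_def m1 by (simp add: tr)
qed

definition msum :: "nat \<Rightarrow> 'b set \<Rightarrow> ('b \<Rightarrow> complex mat) \<Rightarrow> complex mat" where
  "msum d S f = mat d d (\<lambda>(i,j). \<Sum>s\<in>S. f s $$ (i,j))"

lemma msum_carrier[simp]: "msum d S f \<in> carrier_mat d d"
  and msum_dims[simp]: "dim_row (msum d S f) = d" "dim_col (msum d S f) = d"
  and msum_index[simp]: "i < d \<Longrightarrow> j < d \<Longrightarrow> msum d S f $$ (i,j) = (\<Sum>s\<in>S. f s $$ (i,j))"
  unfolding msum_def by auto

lemma msum_mult_left: assumes M: "M \<in> carrier_mat d d" and f: "\<And>s. s \<in> S \<Longrightarrow> f s \<in> carrier_mat d d"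
  shows "M * msum d S f = msum d S (\<lambda>s. M * f s)"
proof (rule eq_matI)
  fix i j assume "i < dim_row (msum d S (\<lambda>s. M * f s))" "j < dim_col (msum d S (\<lambda>s. M * f s))"
  hence i: "i < d" and j: "j < d" by auto
  have "(M * msum d S f) $$ (i,j) = (\<Sum>l<d. M $$ (i,l) * msum d S f $$ (l,j))"
    by (rule mult_index) (use M i j in auto)
  also have "\<dots> = (\<Sum>l<d. \<Sum>s\<in>S. M $$ (i,l) * f s $$ (l,j))"
    using j by (simp add: sum_distrib_left)
  also have "\<dots> = (\<Sum>s\<in>S. \<Sum>l<d. M $$ (i,l) * f s $$ (l,j))" by (rule sum.swap)
  also have "\<dots> = (\<Sum>s\<in>S. (M * f s) $$ (i,j))"
    by (intro sum.cong refl mult_index[symmetric]) (use M f i j in auto)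
  finally show "(M * msum d S f) $$ (i,j) = msum d S (\<lambda>s. M * f s) $$ (i,j)" using i j by simp
qed (use M in auto)

lemma msum_mult_right: assumes M: "M \<in> carrier_mat d d" and f: "\<And>s. s \<in> S \<Longrightarrow> f s \<in> carrier_mat d d"
  shows "msum d S f * M = msum d S (\<lambda>s. f s * M)"
proof (rule eq_matI)
  fix i j assume "i < dim_row (msum d S (\<lambda>s. f s * M))" "j < dim_col (msum d S (\<lambda>s. f s * M))"
  hence i: "i < d" and j: "j < d" by auto
  have "(msum d S f * M) $$ (i,j) = (\<Sum>l<d. msum d S f $$ (i,l) * M $$ (l,j))"
    by (rule mult_index) (use M i j in auto)
  also have "\<dots> = (\<Sum>l<d. \<Sum>s\<in>S. f s $$ (i,l) * M $$ (l,j))"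
    using i by (simp add: sum_distrib_right)
  also have "\<dots> = (\<Sum>s\<in>S. \<Sum>l<d. f s $$ (i,l) * M $$ (l,j))" by (rule sum.swap)
  also have "\<dots> = (\<Sum>s\<in>S. (f s * M) $$ (i,j))"
    by (intro sum.cong refl mult_index[symmetric]) (use M f i j in auto)
  finally show "(msum d S f * M) $$ (i,j) = msum d S (\<lambda>s. f s * M) $$ (i,j)" using i j by simp
qed (use M in auto)

lemma msum_dag: assumes "\<And>s. s \<in> S \<Longrightarrow> f s \<in> carrier_mat d d"
  shows "dag (msum d S f) = msum d S (\<lambda>s. dag (f s))"
  using assms by (intro eq_matI) (auto intro!: sum.cong simp: carrier_matD[OF assms])

lemma msum_cong: "(\<And>s. s \<in> S \<Longrightarrow> f s = g s) \<Longrightarrow> msum d S f = msum d S g"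
  unfolding msum_def by (intro eq_matI) auto

lemma msum_union: assumes "finite S" "finite T" "S \<inter> T = {}"
  shows "msum d (S \<union> T) f = msum d S f + msum d T f"
  using assms by (intro eq_matI) (auto simp: sum.union_disjoint)

lemma msum_reindex: assumes "inj_on h S"
  shows "msum d (h ` S) f = msum d S (\<lambda>s. f (h s))"
  using assms by (intro eq_matI) (auto simp: sum.reindex)

lemma msum_smult: assumes "\<And>s. s \<in> S \<Longrightarrow> f s \<in> carrier_mat d d"
  shows "msum d S (\<lambda>s. c \<cdot>\<^sub>m f s) = c \<cdot>\<^sub>m msum d S f"
  using assms by (intro eq_matI) (auto simp: sum_distrib_left carrier_matD[OF assms] intro!: sum.cong)

lemma msum_add: assumes "\<And>s. s \<in> S \<Longrightarrow> f s \<in> carrier_mat d d" "\<And>s. s \<in> S \<Longrightarrow> g s \<in> carrier_mat d d"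
  shows "msum d S (\<lambda>s. f s + g s) = msum d S f + msum d S g"
proof (rule eq_matI)
  fix i j assume "i < dim_row (msum d S f + msum d S g)" "j < dim_col (msum d S f + msum d S g)"
  hence i: "i < d" and j: "j < d" by auto
  have "(\<Sum>s\<in>S. (f s + g s) $$ (i,j)) = (\<Sum>s\<in>S. f s $$ (i,j) + g s $$ (i,j))"
    using assms i j by (intro sum.cong refl) (auto simp: carrier_matD[OF assms(2)])
  thus "msum d S (\<lambda>s. f s + g s) $$ (i,j) = (msum d S f + msum d S g) $$ (i,j)"
    using i j by (simp add: sum.distrib)
qed auto

definition wprod :: "nat \<Rightarrow> (nat \<Rightarrow> complex mat) \<Rightarrow> nat list \<Rightarrow> (nat \<Rightarrow> bool) \<Rightarrow> complex mat" where
  "wprod d C ks x = foldr (\<lambda>k acc. (if x k then C k else 1\<^sub>m d) * acc) ks (1\<^sub>m d)"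

lemma wprod_Nil[simp]: "wprod d C [] x = 1\<^sub>m d" unfolding wprod_def by simp
lemma wprod_Cons: "wprod d C (k # ks) x = (if x k then C k else 1\<^sub>m d) * wprod d C ks x"
  unfolding wprod_def by simp

lemma wprod_carrier: "(\<And>k. k \<in> set ks \<Longrightarrow> C k \<in> carrier_mat d d) \<Longrightarrow> wprod d C ks x \<in> carrier_mat d d"
proof (induction ks)
  case (Cons a ks)
  hence "C a \<in> carrier_mat d d" "wprod d C ks x \<in> carrier_mat d d" by auto
  thus ?case by (simp add: wprod_Cons mult_carrier_mat[of _ d d _ d])
qed simp

lemma wprod_append: assumes "\<And>k. k \<in> set (xs @ ys) \<Longrightarrow> C k \<in> carrier_mat d d"
  shows "wprod d C (xs @ ys) x = wprod d C xs x * wprod d C ys x"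
  using assms
proof (induction xs)
  case Nil thus ?case using wprod_carrier[of ys C d x] by simp
next
  case (Cons k xs)
  have c1: "(if x k then C k else 1\<^sub>m d) \<in> carrier_mat d d" using Cons.prems by auto
  have c2: "wprod d C xs x \<in> carrier_mat d d" using Cons.prems by (intro wprod_carrier) auto
  have c3: "wprod d C ys x \<in> carrier_mat d d" using Cons.prems by (intro wprod_carrier) auto
  show ?case using Cons c1 c2 c3 by (simp add: wprod_Cons assoc_mult_mat[of _ d d _ d _ d])
qed

lemma wprod_cong: "(\<And>k. k \<in> set ks \<Longrightarrow> x k = y k) \<Longrightarrow> wprod d C ks x = wprod d C ks y"
  by (induction ks) (auto simp: wprod_Cons)

definition twirl :: "nat \<Rightarrow> (nat \<Rightarrow> complex mat) \<Rightarrow> nat \<Rightarrow> complex mat \<Rightarrow> complex mat" where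
  "twirl d V m A = msum d (Pow {1..m})
     (\<lambda>a. dag (wprod d V [1..<Suc m] (\<lambda>k. k \<in> a)) * A * wprod d V [1..<Suc m] (\<lambda>k. k \<in> a))"

lemma twirl_0: assumes "A \<in> carrier_mat d d" shows "twirl d V 0 A = A"
  unfolding twirl_def using assms by (intro eq_matI) auto

lemma twirl_Suc: assumes A: "A \<in> carrier_mat d d" and V: "\<And>k. V k \<in> carrier_mat d d"
  shows "twirl d V (Suc m) A = twirl d V m A + dag (V (Suc m)) * twirl d V m A * V (Suc m)"
proof -
  define W where "W = (\<lambda>a. wprod d V [1..<Suc m] (\<lambda>k. k \<in> a))"
  define W' where "W' = (\<lambda>a. wprod d V [1..<Suc (Suc m)] (\<lambda>k. k \<in> a))"
  have Wc: "\<And>a. W a \<in> carrier_mat d d" unfolding W_def by (rule wprod_carrier) (use V in auto)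
  have dWc: "\<And>a. dag (W a) \<in> carrier_mat d d" using Wc by auto
  have Vc: "V (Suc m) \<in> carrier_mat d d" "dag (V (Suc m)) \<in> carrier_mat d d" using V by auto
  have split: "W' a = W a * wprod d V [Suc m] (\<lambda>k. k \<in> a)" for a
    unfolding W'_def W_def using V by (simp add: wprod_append)
  have W1: "W' a = W a" if "a \<in> Pow {1..m}" for a
  proof -
    have "Suc m \<notin> a" using that by auto
    thus ?thesis unfolding split using Wc[of a] by (simp add: wprod_Cons)
  qed
  have W2: "W' (insert (Suc m) a) = W a * V (Suc m)" for a
  proof -
    have "W (insert (Suc m) a) = W a" unfolding W_def by (rule wprod_cong) auto
    thus ?thesis unfolding split using Vc by (simp add: wprod_Cons)
  qed
  have P: "Pow {1..Suc m} = Pow {1..m} \<union> insert (Suc m) ` Pow {1..m}"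
    by (simp add: atLeastAtMostSuc_conv Pow_insert)
  have disj: "Pow {1..m} \<inter> insert (Suc m) ` Pow {1..m} = {}" by auto
  have inj: "inj_on (insert (Suc m)) (Pow {1..m})"
    by (rule inj_onI) (metis Pow_iff atLeastAtMost_iff insert_ident le_SucE n_not_Suc_n subset_iff Suc_n_not_le_n)
  have tw: "twirl d V m A = msum d (Pow {1..m}) (\<lambda>a. dag (W a) * A * W a)"
    unfolding twirl_def W_def ..
  have "twirl d V (Suc m) A = msum d (Pow {1..Suc m}) (\<lambda>a. dag (W' a) * A * W' a)"
    unfolding twirl_def W'_def ..
  also have "\<dots> = msum d (Pow {1..m}) (\<lambda>a. dag (W' a) * A * W' a)
      + msum d (insert (Suc m) ` Pow {1..m}) (\<lambda>a. dag (W' a) * A * W' a)"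
    unfolding P by (rule msum_union) (use disj in auto)
  also have "msum d (Pow {1..m}) (\<lambda>a. dag (W' a) * A * W' a) = twirl d V m A"
    unfolding tw by (rule msum_cong) (simp only: W1)
  also have "msum d (insert (Suc m) ` Pow {1..m}) (\<lambda>a. dag (W' a) * A * W' a)
     = msum d (Pow {1..m}) (\<lambda>a. dag (V (Suc m)) * (dag (W a) * A * W a) * V (Suc m))"
    unfolding msum_reindex[OF inj] W2
    by (rule msum_cong) (use Wc dWc Vc A in \<open>simp add: dag_mult[of _ d d _ d] assoc_mult_mat[of _ d d _ d _ d] mult_carrier_mat[of _ d d _ d]\<close>)
  also have "\<dots> = dag (V (Suc m)) * twirl d V m A * V (Suc m)"
  proof -
    have f: "\<And>a. dag (W a) * A * W a \<in> carrier_mat d d" using Wc dWc A by (meson mult_carrier_mat)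
    have f2: "\<And>a. dag (V (Suc m)) * (dag (W a) * A * W a) \<in> carrier_mat d d" using f Vc by (meson mult_carrier_mat)
    have "dag (V (Suc m)) * twirl d V m A = msum d (Pow {1..m}) (\<lambda>a. dag (V (Suc m)) * (dag (W a) * A * W a))"
      unfolding tw by (rule msum_mult_left[OF Vc(2) f])
    hence "dag (V (Suc m)) * twirl d V m A * V (Suc m) = msum d (Pow {1..m}) (\<lambda>a. dag (V (Suc m)) * (dag (W a) * A * W a)) * V (Suc m)"
      by simp
    also have "\<dots> = msum d (Pow {1..m}) (\<lambda>a. dag (V (Suc m)) * (dag (W a) * A * W a) * V (Suc m))"
      by (rule msum_mult_right[OF Vc(1) f2])
    finally show ?thesis by simp
  qed
  finally show ?thesis .
qed

lemma mod_inj_aux: "((i::nat) + t) mod d = (i + t') mod d \<Longrightarrow> t < d \<Longrightarrow> t' < d \<Longrightarrow> t \<le> t' \<Longrightarrow> t = t'"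
proof -
  assume a: "(i + t) mod d = (i + t') mod d" "t < d" "t' < d" "t \<le> t'"
  have "d dvd (i + t') - (i + t)" using a mod_eq_dvd_iff_nat[of "i+t" "i+t'" d] by simp
  hence dv: "d dvd t' - t" by simp
  have lt: "t' - t < d" using a by linarith
  show "t = t'"
  proof (rule ccontr)
    assume "t \<noteq> t'"
    hence "0 < t' - t" using a by simp
    thus False using nat_dvd_not_less[OF _ lt] dv by blast
  qed
qed

lemma mod_inj: "((i::nat) + t) mod d = (i + t') mod d \<Longrightarrow> t < d \<Longrightarrow> t' < d \<Longrightarrow> t = t'"
  using mod_inj_aux[of i t d t'] mod_inj_aux[of i t' d t] by (cases "t \<le> t'") auto

lemma sum_mod_shift: assumes d: "(d::nat) > 0"
  shows "(\<Sum>t<d. f ((i + t) mod d)) = (\<Sum>t<d. (f t :: complex))"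
proof -
  have inj: "inj_on (\<lambda>t. (i + t) mod d) {..<d}"
  proof (rule inj_onI)
    fix x y assume "x \<in> {..<d}" "y \<in> {..<d}" "(i + x) mod d = (i + y) mod d"
    thus "x = y" using mod_inj[of i x d y] by simp
  qed
  have sub: "(\<lambda>t. (i + t) mod d) ` {..<d} \<subseteq> {..<d}" using d by auto
  have eq: "(\<lambda>t. (i + t) mod d) ` {..<d} = {..<d}" by (rule endo_inj_surj[OF _ sub inj]) simp
  have "(\<Sum>t<d. f t) = (\<Sum>t\<in>(\<lambda>t. (i + t) mod d) ` {..<d}. f t)" unfolding eq ..
  also have "\<dots> = (\<Sum>t<d. f ((i + t) mod d))" by (simp add: sum.reindex[OF inj])
  finally show ?thesis by simp
qed

definition Dm :: "nat \<Rightarrow> nat \<Rightarrow> complex mat" where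
  "Dm d s = diagm d (\<lambda>i. if i = s then -1 else 1)"

definition Pm :: "nat \<Rightarrow> nat \<Rightarrow> complex mat" where
  "Pm d t = mat d d (\<lambda>(i,j). if i = (j + t) mod d then 1 else 0)"

lemma Dm_carrier[simp]: "Dm d s \<in> carrier_mat d d" unfolding Dm_def by simp
lemma Pm_carrier[simp]: "Pm d t \<in> carrier_mat d d" unfolding Pm_def by simp
lemma Pm_dims[simp]: "dim_row (Pm d t) = d" "dim_col (Pm d t) = d" unfolding Pm_def by auto
lemma Pm_index[simp]: "i < d \<Longrightarrow> j < d \<Longrightarrow> Pm d t $$ (i,j) = (if i = (j + t) mod d then 1 else 0)"
  unfolding Pm_def by simp

lemma dag_diagm: "dag (diagm n g) = diagm n (\<lambda>i. cnj (g i))"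
  by (rule eq_matI) auto

lemma Dm_conj: assumes B: "B \<in> carrier_mat d d" and ij: "i < d" "j < d"
  shows "(dag (Dm d s) * B * Dm d s) $$ (i,j)
     = (if i = s then -1 else 1) * B $$ (i,j) * (if j = s then -1 else 1)"
proof -
  have dD: "dag (Dm d s) = Dm d s" unfolding Dm_def dag_diagm by (intro eq_matI) auto
  have "(Dm d s * B * Dm d s) $$ (i,j) = (Dm d s * B) $$ (i,j) * (if j = s then -1 else 1)"
    unfolding Dm_def by (rule mult_diagm_index) (use B ij in auto)
  also have "(Dm d s * B) $$ (i,j) = (if i = s then -1 else 1) * B $$ (i,j)"
    unfolding Dm_def by (rule diagm_mult_index) (use B ij in auto)
  finally show ?thesis unfolding dD .
qed

lemma Pm_conj: assumes d: "d > 0" and B: "B \<in> carrier_mat d d" and ij: "i < d" "j < d"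
  shows "(dag (Pm d t) * B * Pm d t) $$ (i,j) = B $$ ((i + t) mod d, (j + t) mod d)"
proof -
  have dP: "dag (Pm d t) \<in> carrier_mat d d" by simp
  have X: "(dag (Pm d t) * B) $$ (i,l) = B $$ ((i + t) mod d, l)" if l: "l < d" for l
  proof -
    have "(dag (Pm d t) * B) $$ (i,l) = (\<Sum>k<d. dag (Pm d t) $$ (i,k) * B $$ (k,l))"
      by (rule mult_index[OF dP B ij(1) l])
    also have "\<dots> = (\<Sum>k<d. if k = (i + t) mod d then B $$ (k,l) else 0)"
      using ij by (intro sum.cong refl) auto
    also have "\<dots> = B $$ ((i + t) mod d, l)" using d by simp
    finally show ?thesis .
  qed
  have "(dag (Pm d t) * B * Pm d t) $$ (i,j) = (\<Sum>l<d. (dag (Pm d t) * B) $$ (i,l) * Pm d t $$ (l,j))"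
    by (rule mult_index) (use B ij dP mult_carrier_mat[OF dP B] in auto)
  also have "\<dots> = (\<Sum>l<d. if l = (j + t) mod d then B $$ ((i + t) mod d, l) else 0)"
    using ij by (intro sum.cong refl) (auto simp: X simp del: index_mult_mat)
  also have "\<dots> = B $$ ((i + t) mod d, (j + t) mod d)" using d by simp
  finally show ?thesis .
qed

lemma Dm_unitary: "unitary_mat d (Dm d s)"
proof (rule unitaryI_left)
  show "dag (Dm d s) * Dm d s = 1\<^sub>m d"
    unfolding Dm_def dag_diagm diagm_mult by (rule eq_matI) auto
qed simp

lemma Pm_unitary: assumes d: "d > 0" shows "unitary_mat d (Pm d t)"
proof (rule unitaryI_left)
  show "dag (Pm d t) * Pm d t = 1\<^sub>m d"
  proof (rule eq_matI)
    fix i j assume "i < dim_row (1\<^sub>m d)" "j < dim_col (1\<^sub>m d)"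
    hence ij: "i < d" "j < d" by auto
    have "dag (Pm d t) * Pm d t = dag (Pm d t) * 1\<^sub>m d * Pm d t"
      using right_mult_one_mat[of "dag (Pm d t)" d d] by simp
    hence "(dag (Pm d t) * Pm d t) $$ (i,j) = 1\<^sub>m d $$ ((i + t) mod d, (j + t) mod d)"
      using Pm_conj[OF d _ ij, of "1\<^sub>m d" t] by simp
    also have "\<dots> = 1\<^sub>m d $$ (i,j)"
      using ij d mod_inj[of t i d j] by (auto simp: add.commute)
    finally show "(dag (Pm d t) * Pm d t) $$ (i,j) = 1\<^sub>m d $$ (i,j)" .
  qed auto
qed simp

lemma sum_double: "(\<Sum>t<(a::nat) + a. f t) = (\<Sum>t<a. f t) + (\<Sum>t<a. f (a + t) :: complex)"
proof -
  have "(\<Sum>t\<in>{0..<a}. f t) + (\<Sum>t\<in>{a..<a+a}. f t) = (\<Sum>t\<in>{0..<a+a}. f t)"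
    by (rule sum.atLeastLessThan_concat) auto
  hence "(\<Sum>t<a + a. f t) = (\<Sum>t\<in>{0..<a}. f t) + (\<Sum>t\<in>{a..<a+a}. f t)"
    by (simp add: atLeast0LessThan)
  also have "(\<Sum>t\<in>{a..<a+a}. f t) = (\<Sum>t\<in>{0+a..<a+a}. f t)" by simp
  also have "\<dots> = (\<Sum>t\<in>{0..<a}. f (t + a))" by (rule sum.shift_bounds_nat_ivl)
  finally show ?thesis by (simp add: atLeast0LessThan add.commute)
qed

definition Vsel :: "nat \<Rightarrow> nat \<Rightarrow> complex mat" where
  "Vsel d k = (if k \<le> d then Dm d (k - 1) else Pm d (2 ^ (k - d - 1)))"

lemma Dm_dims[simp]: "dim_row (Dm d s) = d" "dim_col (Dm d s) = d" unfolding Dm_def by auto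

lemma Vsel_carrier[simp]: "Vsel d k \<in> carrier_mat d d" unfolding Vsel_def by simp

lemma Vsel_unitary: "d > 0 \<Longrightarrow> unitary_mat d (Vsel d k)"
  unfolding Vsel_def using Dm_unitary Pm_unitary by simp

lemma phase1: assumes A: "A \<in> carrier_mat d d" and r: "r \<le> d" and ij: "i < d" "j < d"
  shows "twirl d (Vsel d) r A $$ (i,j) = 2^r * A $$ (i,j) * (if (\<forall>s<r. (i = s) = (j = s)) then 1 else 0)"
  using r
proof (induction r)
  case 0 thus ?case using twirl_0[OF A] by simp
next
  case (Suc r)
  define T where "T = twirl d (Vsel d) r A"
  have Tc: "T \<in> carrier_mat d d" unfolding T_def twirl_def by simp
  have V: "Vsel d (Suc r) = Dm d r" using Suc.prems unfolding Vsel_def by simp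
  have "twirl d (Vsel d) (Suc r) A $$ (i,j) = T $$ (i,j) + (dag (Dm d r) * T * Dm d r) $$ (i,j)"
    unfolding twirl_Suc[OF A Vsel_carrier] T_def[symmetric] V using ij Tc by simp
  also have "\<dots> = T $$ (i,j) * (1 + (if i = r then -1 else 1) * (if j = r then -1 else 1))"
    unfolding Dm_conj[OF Tc ij] by (simp add: algebra_simps)
  also have "\<dots> = 2^(Suc r) * A $$ (i,j) * (if (\<forall>s<Suc r. (i = s) = (j = s)) then 1 else 0)"
    unfolding T_def Suc.IH[OF Suc_leD[OF Suc.prems]]
    by (auto simp: less_Suc_eq)
  finally show ?case .
qed

lemma phase1_end: assumes A: "A \<in> carrier_mat d d" and ij: "i < d" "j < d"
  shows "twirl d (Vsel d) d A $$ (i,j) = (if i = j then 2^d * A $$ (i,i) else 0)"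
proof -
  have "(\<forall>s<d. (i = s) = (j = s)) = (i = j)" using ij by auto
  thus ?thesis unfolding phase1[OF A le_refl ij] by simp
qed

lemma phase2: assumes A: "A \<in> carrier_mat d d" and d: "d = 2 ^ n" and r: "r \<le> n" and ij: "i < d" "j < d"
  shows "twirl d (Vsel d) (d + r) A $$ (i,j) =
     (if i = j then 2^d * (\<Sum>t<2^r. A $$ ((i + t) mod d, (i + t) mod d)) else 0)"
  using r ij
proof (induction r arbitrary: i j)
  case 0 thus ?case using phase1_end[OF A 0(2,3)] by simp
next
  case (Suc r i j)
  have d0: "d > 0" using d by simp
  define T where "T = twirl d (Vsel d) (d + r) A"
  have Tc: "T \<in> carrier_mat d d" unfolding T_def twirl_def by simp
  have V: "Vsel d (Suc (d + r)) = Pm d (2^r)" unfolding Vsel_def by simp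
  define t0 where "t0 = (2::nat)^r"
  have IH: "\<And>i j. i < d \<Longrightarrow> j < d \<Longrightarrow> T $$ (i,j) =
     (if i = j then 2^d * (\<Sum>t<t0. A $$ ((i + t) mod d, (i + t) mod d)) else 0)"
    unfolding T_def t0_def using Suc.IH Suc.prems by simp
  have "twirl d (Vsel d) (d + Suc r) A $$ (i,j) = T $$ (i,j) + (dag (Pm d t0) * T * Pm d t0) $$ (i,j)"
    unfolding add_Suc_right twirl_Suc[OF A Vsel_carrier] T_def[symmetric] V t0_def using Suc.prems by simp
  also have "\<dots> = T $$ (i,j) + T $$ ((i + t0) mod d, (j + t0) mod d)"
    unfolding Pm_conj[OF d0 Tc Suc.prems(2,3)] ..
  also have "\<dots> = (if i = j then 2^d * (\<Sum>t<2^Suc r. A $$ ((i + t) mod d, (i + t) mod d)) else 0)"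
  proof (cases "i = j")
    case False
    hence "(i + t0) mod d \<noteq> (j + t0) mod d" using mod_inj[of t0 i d j] Suc.prems by (auto simp: add.commute)
    thus ?thesis using False IH Suc.prems d0 by simp
  next
    case True
    have m: "((i + t0) mod d + t) mod d = (i + (t0 + t)) mod d" for t
      by (simp add: mod_add_left_eq add.assoc)
    have "T $$ (i,j) + T $$ ((i + t0) mod d, (j + t0) mod d)
       = 2^d * ((\<Sum>t<t0. A $$ ((i + t) mod d, (i + t) mod d))
           + (\<Sum>t<t0. A $$ ((i + (t0 + t)) mod d, (i + (t0 + t)) mod d)))"
    proof -
      have e1: "T $$ (i,i) = 2^d * (\<Sum>t<t0. A $$ ((i + t) mod d, (i + t) mod d))"
        using IH[of i i] True Suc.prems by simp
      have e2: "T $$ ((i + t0) mod d, (i + t0) mod d)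
          = 2^d * (\<Sum>t<t0. A $$ ((i + (t0 + t)) mod d, (i + (t0 + t)) mod d))"
      proof -
        have "T $$ ((i + t0) mod d, (i + t0) mod d)
          = 2^d * (\<Sum>t<t0. A $$ (((i + t0) mod d + t) mod d, ((i + t0) mod d + t) mod d))"
          using IH[of "(i + t0) mod d" "(i + t0) mod d"] d0 by simp
        thus ?thesis unfolding m .
      qed
      show ?thesis unfolding True[symmetric] e1 e2 by (simp add: algebra_simps)
    qed
    also have "\<dots> = 2^d * (\<Sum>t<2^Suc r. A $$ ((i + t) mod d, (i + t) mod d))"
      unfolding t0_def by (simp add: mult_2 sum_double)
    finally show ?thesis using True by simp
  qed
  finally show ?case .
qed

lemma twirl_final: assumes A: "A \<in> carrier_mat d d" and d: "d = 2 ^ n"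
  shows "twirl d (Vsel d) (d + n) A = (2^d * mtrace A) \<cdot>\<^sub>m 1\<^sub>m d"
proof (rule eq_matI)
  fix i j assume "i < dim_row ((2^d * mtrace A) \<cdot>\<^sub>m 1\<^sub>m d)" "j < dim_col ((2^d * mtrace A) \<cdot>\<^sub>m 1\<^sub>m d)"
  hence ij: "i < d" "j < d" by auto
  have d0: "d > 0" using d by simp
  have "(\<Sum>t<2^n. A $$ ((i + t) mod d, (i + t) mod d)) = (\<Sum>t<d. A $$ (t,t))"
    unfolding d[symmetric] by (rule sum_mod_shift[OF d0, of "\<lambda>x. A $$ (x,x)"])
  also have "\<dots> = mtrace A" unfolding mtrace_def using A by simp
  finally show "twirl d (Vsel d) (d + n) A $$ (i,j) = ((2^d * mtrace A) \<cdot>\<^sub>m 1\<^sub>m d) $$ (i,j)"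
    unfolding phase2[OF A d le_refl ij] using ij by auto
qed (auto simp: twirl_def)

lemma smult_smult_mat: "a \<cdot>\<^sub>m (b \<cdot>\<^sub>m A) = (a * b :: complex) \<cdot>\<^sub>m A"
  by (rule eq_matI) auto

lemma h_prod: "hadamard_entry a False * hadamard_entry b False = 1/2"
proof -
  have "complex_of_real (sqrt 2) * complex_of_real (sqrt 2) = 2"
    by (simp flip: of_real_mult)
  thus ?thesis unfolding hadamard_entry_def by (simp add: field_simps)
qed

definition blk_ok :: "nat \<Rightarrow> block \<Rightarrow> bool" where
  "blk_ok d B \<longleftrightarrow> (\<forall>x y. B x y \<in> carrier_mat d d)"

lemma blk_okD: "blk_ok d B \<Longrightarrow> B x y \<in> carrier_mat d d" unfolding blk_ok_def by auto

lemma hadamard_ok: "blk_ok d B \<Longrightarrow> blk_ok d (pcs_hadamard k B)"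
  unfolding blk_ok_def pcs_hadamard_def by auto

lemma fold_hadamard_ok: "blk_ok d B \<Longrightarrow> blk_ok d (fold pcs_hadamard ks B)"
  by (induction ks arbitrary: B) (auto simp: hadamard_ok)

lemma H_init:
  assumes rho: "\<rho> \<in> carrier_mat d d" and dist: "distinct ks"
  shows "fold pcs_hadamard ks (pcs_init d \<rho>) = (\<lambda>x y.
     if (\<forall>k. x k \<longrightarrow> k \<in> set ks) \<and> (\<forall>k. y k \<longrightarrow> k \<in> set ks)
     then ((1/2) ^ length ks) \<cdot>\<^sub>m \<rho> else 0\<^sub>m d d)"
  using dist
proof (induction ks rule: rev_induct)
  case Nil
  show ?case unfolding pcs_init_def by (intro ext) (auto simp: fun_eq_iff)
next
  case (snoc k ks)
  have kn: "k \<notin> set ks" and dks: "distinct ks" using snoc.prems by auto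
  note IH = snoc.IH[OF dks]
  show ?case
  proof (intro ext)
    fix x y
    define cc where "cc \<longleftrightarrow> (\<forall>k'. x k' \<longrightarrow> k' \<in> set (ks @ [k])) \<and> (\<forall>k'. y k' \<longrightarrow> k' \<in> set (ks @ [k]))"
    have c0: "((\<forall>k'. (x(k := False)) k' \<longrightarrow> k' \<in> set ks) \<and> (\<forall>k'. (y(k := False)) k' \<longrightarrow> k' \<in> set ks)) = cc"
      unfolding cc_def by auto
    have c1: "\<not> ((\<forall>k'. (x(k := True)) k' \<longrightarrow> k' \<in> set ks) \<and> (\<forall>k'. (y(k := b)) k' \<longrightarrow> k' \<in> set ks))" for b
      using kn by auto
    have c2: "\<not> ((\<forall>k'. (x(k := b)) k' \<longrightarrow> k' \<in> set ks) \<and> (\<forall>k'. (y(k := True)) k' \<longrightarrow> k' \<in> set ks))" for b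
      using kn by auto
    have "fold pcs_hadamard (ks @ [k]) (pcs_init d \<rho>) x y
        = (hadamard_entry (x k) False * hadamard_entry (y k) False) \<cdot>\<^sub>m
            (if cc then ((1/2) ^ length ks) \<cdot>\<^sub>m \<rho> else 0\<^sub>m d d) + 0\<^sub>m d d + 0\<^sub>m d d + 0\<^sub>m d d"
      unfolding fold_append o_def fold_simps pcs_hadamard_def IH c0[symmetric]
      using c1 c2 by (simp only: if_False smult_zero_mat)
    also have "\<dots> = (if cc then ((1/2) ^ length (ks @ [k])) \<cdot>\<^sub>m \<rho> else 0\<^sub>m d d)"
      using rho by (simp add: h_prod smult_smult_mat)
    finally show "fold pcs_hadamard (ks @ [k]) (pcs_init d \<rho>) x y =
       (if (\<forall>k'. x k' \<longrightarrow> k' \<in> set (ks @ [k])) \<and> (\<forall>k'. y k' \<longrightarrow> k' \<in> set (ks @ [k]))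
        then ((1/2) ^ length (ks @ [k])) \<cdot>\<^sub>m \<rho> else 0\<^sub>m d d)" unfolding cc_def .
  qed
qed

lemma h_prod2: "hadamard_entry False a * hadamard_entry False b = 1/2"
proof -
  have "complex_of_real (sqrt 2) * complex_of_real (sqrt 2) = 2"
    by (simp flip: of_real_mult)
  thus ?thesis unfolding hadamard_entry_def by (simp add: field_simps)
qed

lemma sum_Pow_insert: assumes "finite S" "k \<notin> S"
  shows "(\<Sum>a\<in>Pow (insert k S). G a) = (\<Sum>a\<in>Pow S. G a) + (\<Sum>a\<in>Pow S. G (insert k a))"
proof -
  have disj: "Pow S \<inter> insert k ` Pow S = {}" using assms by auto
  have inj: "inj_on (insert k) (Pow S)" using assms by (intro inj_onI) (metis PowD insert_ident subsetD)
  have "(\<Sum>a\<in>Pow (insert k S). G a) = (\<Sum>a\<in>Pow S \<union> insert k ` Pow S. G a)"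
    by (simp add: Pow_insert)
  also have "\<dots> = (\<Sum>a\<in>Pow S. G a) + (\<Sum>a\<in>insert k ` Pow S. G a)"
    by (rule sum.union_disjoint) (use assms disj in auto)
  also have "(\<Sum>a\<in>insert k ` Pow S. G a) = (\<Sum>a\<in>Pow S. G (insert k a))"
    by (rule sum.reindex_cong[OF inj refl refl])
  finally show ?thesis .
qed

lemma H_final:
  assumes dist: "distinct ks" and B: "blk_ok d B"
    and xy: "\<And>k. k \<in> set ks \<Longrightarrow> \<not> x k \<and> \<not> y k" and ij: "i < d" "j < d"
  shows "fold pcs_hadamard ks B x y $$ (i,j) = (1/2) ^ length ks *
     (\<Sum>a\<in>Pow (set ks). \<Sum>b\<in>Pow (set ks). B (\<lambda>k. x k \<or> k \<in> a) (\<lambda>k. y k \<or> k \<in> b) $$ (i,j))"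
  using dist xy
proof (induction ks arbitrary: x y rule: rev_induct)
  case Nil
  have "(\<lambda>k. x k \<or> k \<in> {}) = x" "(\<lambda>k. y k \<or> k \<in> {}) = y" by auto
  thus ?case by simp
next
  case (snoc k ks x y)
  have kn: "k \<notin> set ks" and dks: "distinct ks" using snoc.prems by auto
  have xk: "\<not> x k" "\<not> y k" using snoc.prems by auto
  define F where "F = fold pcs_hadamard ks B"
  have Fok: "blk_ok d F" unfolding F_def by (rule fold_hadamard_ok[OF B])
  define G where "G = (\<lambda>a b. B (\<lambda>k. x k \<or> k \<in> a) (\<lambda>k. y k \<or> k \<in> b) $$ (i,j))"
  have IH: "F (x(k := \<alpha>)) (y(k := \<beta>)) $$ (i,j) = (1/2) ^ length ks *
     (\<Sum>a\<in>Pow (set ks). \<Sum>b\<in>Pow (set ks).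
        B (\<lambda>k'. (x(k := \<alpha>)) k' \<or> k' \<in> a) (\<lambda>k'. (y(k := \<beta>)) k' \<or> k' \<in> b) $$ (i,j))" for \<alpha> \<beta>
    unfolding F_def by (rule snoc.IH[OF dks]) (use snoc.prems kn in auto)
  have fx: "(\<lambda>k'. (x(k := False)) k' \<or> k' \<in> a) = (\<lambda>k'. x k' \<or> k' \<in> a)"
     "(\<lambda>k'. (x(k := True)) k' \<or> k' \<in> a) = (\<lambda>k'. x k' \<or> k' \<in> insert k a)"
     "(\<lambda>k'. (y(k := False)) k' \<or> k' \<in> a) = (\<lambda>k'. y k' \<or> k' \<in> a)"
     "(\<lambda>k'. (y(k := True)) k' \<or> k' \<in> a) = (\<lambda>k'. y k' \<or> k' \<in> insert k a)" for a
    using xk by auto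
  have c: "\<And>\<alpha> \<beta>. F (x(k := \<alpha>)) (y(k := \<beta>)) \<in> carrier_mat d d" using Fok blk_okD by blast
  have "fold pcs_hadamard (ks @ [k]) B x y $$ (i,j) = pcs_hadamard k F x y $$ (i,j)"
    unfolding F_def by simp
  also have "\<dots> = 1/2 * (F (x(k := False)) (y(k := False)) $$ (i,j) + F (x(k := False)) (y(k := True)) $$ (i,j)
      + F (x(k := True)) (y(k := False)) $$ (i,j) + F (x(k := True)) (y(k := True)) $$ (i,j))"
    unfolding pcs_hadamard_def using xk c ij by (simp add: h_prod2 algebra_simps carrier_matD[OF c])
  also have "\<dots> = (1/2) ^ length (ks @ [k]) *
     (\<Sum>a\<in>Pow (set ks). \<Sum>b\<in>Pow (set ks). G a b + G a (insert k b) + G (insert k a) b + G (insert k a) (insert k b))"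
    unfolding IH fx G_def by (simp add: sum.distrib algebra_simps)
  also have "(\<Sum>a\<in>Pow (set ks). \<Sum>b\<in>Pow (set ks). G a b + G a (insert k b) + G (insert k a) b + G (insert k a) (insert k b))
      = (\<Sum>a\<in>Pow (set (ks @ [k])). \<Sum>b\<in>Pow (set (ks @ [k])). G a b)"
    using kn by (simp add: sum_Pow_insert sum.distrib algebra_simps)
  finally show ?case unfolding G_def .
qed

lemma ctl_fold:
  assumes B: "blk_ok d B" and C: "\<And>k. C k \<in> carrier_mat d d"
  shows "fold (\<lambda>k. pcs_controlled d k (C k)) (rev ks) B = (\<lambda>x y. wprod d C ks x * B x y * dag (wprod d C ks y))"
proof (induction ks)
  case Nil
  show ?case
  proof (intro ext)
    fix x y
    have "B x y \<in> carrier_mat d d" using B blk_okD by auto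
    thus "fold (\<lambda>k. pcs_controlled d k (C k)) (rev []) B x y = wprod d C [] x * B x y * dag (wprod d C [] y)"
      by simp
  qed
next
  case (Cons k ks)
  show ?case
  proof (intro ext)
    fix x y
    define Wx where "Wx = wprod d C ks x"
    define Wy where "Wy = wprod d C ks y"
    define cx where "cx = (if x k then C k else 1\<^sub>m d)"
    define cy where "cy = (if y k then C k else 1\<^sub>m d)"
    have Wc: "Wx \<in> carrier_mat d d" "Wy \<in> carrier_mat d d" "dag Wy \<in> carrier_mat d d"
      unfolding Wx_def Wy_def using wprod_carrier[of ks C d] C by auto
    have cc: "cx \<in> carrier_mat d d" "cy \<in> carrier_mat d d" "dag cy \<in> carrier_mat d d"
      unfolding cx_def cy_def using C by auto
    have Bc: "B x y \<in> carrier_mat d d" using B blk_okD by auto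
    have dcy: "dag cy = (if y k then dag (C k) else 1\<^sub>m d)" unfolding cy_def by simp
    have "fold (\<lambda>k. pcs_controlled d k (C k)) (rev (k # ks)) B x y
       = cx * (Wx * B x y * dag Wy) * dag cy"
      unfolding rev.simps fold_append o_def fold_simps Cons.IH pcs_controlled_def
        Wx_def[symmetric] Wy_def[symmetric] cx_def dcy by simp
    also have "\<dots> = (cx * Wx) * B x y * (dag Wy * dag cy)"
      using Wc cc Bc by (simp add: assoc_mult_mat[of _ d d _ d _ d] mult_carrier_mat[of _ d d _ d])
    also have "dag Wy * dag cy = dag (cy * Wy)" using dag_mult[of cy d d Wy d] Wc cc by simp
    finally show "fold (\<lambda>k. pcs_controlled d k (C k)) (rev (k # ks)) B x y
       = wprod d C (k # ks) x * B x y * dag (wprod d C (k # ks) y)"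
      unfolding wprod_Cons Wx_def Wy_def cx_def cy_def .
  qed
qed

lemma wprod_conj:
  assumes U: "unitary_mat d U" and V: "\<And>k. V k \<in> carrier_mat d d"
  shows "wprod d (\<lambda>k. U * dag (V k) * dag U) (rev ks) x = U * dag (wprod d V ks x) * dag U"
proof (induction ks)
  case Nil
  have "U \<in> carrier_mat d d" "U * dag U = 1\<^sub>m d" using U unfolding unitary_mat_def by auto
  thus ?case by simp
next
  case (Cons k ks)
  have Uc: "U \<in> carrier_mat d d" "dag U \<in> carrier_mat d d" using U unitary_carrier by auto
  have UU: "dag U * U = 1\<^sub>m d" using U unfolding unitary_mat_def by auto
  have C2: "\<And>k. U * dag (V k) * dag U \<in> carrier_mat d d" using Uc V by (meson dag_carrierI mult_carrier_mat)
  define W where "W = wprod d V ks x"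
  have Wc: "W \<in> carrier_mat d d" "dag W \<in> carrier_mat d d" unfolding W_def using wprod_carrier[of ks V d] V by auto
  have Vc: "V k \<in> carrier_mat d d" "dag (V k) \<in> carrier_mat d d" using V by auto
  have "wprod d (\<lambda>k. U * dag (V k) * dag U) (rev (k # ks)) x
      = wprod d (\<lambda>k. U * dag (V k) * dag U) (rev ks) x * wprod d (\<lambda>k. U * dag (V k) * dag U) [k] x"
    unfolding rev.simps by (rule wprod_append) (use C2 in auto)
  also have "\<dots> = U * dag W * dag U * (if x k then U * dag (V k) * dag U else 1\<^sub>m d)"
    unfolding Cons.IH W_def[symmetric] using C2[of k] by (simp add: wprod_Cons carrier_matD[OF Uc(1)])
  also have "\<dots> = U * dag (wprod d V (k # ks) x) * dag U"
  proof (cases "x k")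
    case True
    have "U * dag W * dag U * (U * dag (V k) * dag U) = U * dag W * (dag U * U) * dag (V k) * dag U"
      using Uc Wc Vc by (simp add: assoc_mult_mat[of _ d d _ d _ d] mult_carrier_mat[of _ d d _ d])
    also have "\<dots> = U * (dag W * dag (V k)) * dag U"
      unfolding UU using Uc Wc Vc by (simp add: assoc_mult_mat[of _ d d _ d _ d] mult_carrier_mat[of _ d d _ d])
    also have "dag W * dag (V k) = dag (V k * W)" using dag_mult[of "V k" d d W d] Wc Vc by simp
    finally show ?thesis using True unfolding wprod_Cons W_def by simp
  next
    case False
    have "U * dag W * dag U * 1\<^sub>m d = U * dag W * dag U" using Uc Wc by simp
    thus ?thesis using False Wc unfolding wprod_Cons W_def by simp
  qed
  finally show ?case .
qed

lemma msum_bilinear: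
  assumes X: "\<And>a. X a \<in> carrier_mat d d" and R: "R \<in> carrier_mat d d"
  shows "msum d S (\<lambda>a. msum d S (\<lambda>b. X a * R * dag (X b))) = msum d S X * R * dag (msum d S X)"
proof -
  have dX: "\<And>a. dag (X a) \<in> carrier_mat d d" using X by auto
  have XR: "\<And>a. X a * R \<in> carrier_mat d d" by (rule mult_carrier_mat[OF X R])
  have "msum d S X * R * dag (msum d S X) = msum d S (\<lambda>a. X a * R) * msum d S (\<lambda>b. dag (X b))"
    by (simp add: msum_mult_right[OF R X] msum_dag[OF X])
  also have "\<dots> = msum d S (\<lambda>a. X a * R * msum d S (\<lambda>b. dag (X b)))"
    by (rule msum_mult_right) (use XR in auto)
  also have "\<dots> = msum d S (\<lambda>a. msum d S (\<lambda>b. X a * R * dag (X b)))"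
    by (rule msum_cong, rule msum_mult_left) (use XR dX in auto)
  finally show ?thesis by simp
qed

lemma kraus_carrier: "(\<And>E. E \<in> set Es \<Longrightarrow> E \<in> carrier_mat d d) \<Longrightarrow> M \<in> carrier_mat d d
   \<Longrightarrow> kraus_apply d Es M \<in> carrier_mat d d"
proof (induction Es)
  case Nil thus ?case unfolding kraus_apply_def by simp
next
  case (Cons E Es)
  hence "kraus_apply d Es M \<in> carrier_mat d d" "E \<in> carrier_mat d d" by auto
  thus ?case using Cons.prems unfolding kraus_apply_def by simp
qed

lemma kraus_Cons: "kraus_apply d (E # Es) M = E * M * dag E + kraus_apply d Es M"
  unfolding kraus_apply_def by simp

lemma kraus_msum:
  assumes W2: "\<And>a. W2 a \<in> carrier_mat d d" and W: "\<And>a. W a \<in> carrier_mat d d"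
    and U: "U \<in> carrier_mat d d" and R: "R \<in> carrier_mat d d"
    and Es: "\<And>E. E \<in> set Es \<Longrightarrow> E \<in> carrier_mat d d"
  shows "msum d S (\<lambda>a. msum d S (\<lambda>b. W2 a * kraus_apply d Es (U * (W a * R * dag (W b)) * dag U) * dag (W2 b)))
   = foldr (\<lambda>E acc. msum d S (\<lambda>a. W2 a * E * U * W a) * R * dag (msum d S (\<lambda>a. W2 a * E * U * W a)) + acc) Es (0\<^sub>m d d)"
  using Es
proof (induction Es)
  case Nil
  have "msum d S (\<lambda>a. msum d S (\<lambda>b. W2 a * kraus_apply d [] (U * (W a * R * dag (W b)) * dag U) * dag (W2 b)))
     = msum d S (\<lambda>a. msum d S (\<lambda>b. 0\<^sub>m d d))"
  proof (intro msum_cong)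
    fix a b
    have "W2 a * 0\<^sub>m d d = 0\<^sub>m d d" using W2[of a] by (rule right_mult_zero_mat)
    moreover have "0\<^sub>m d d * dag (W2 b) = 0\<^sub>m d d" using W2[of b] by (intro left_mult_zero_mat) auto
    ultimately show "W2 a * kraus_apply d [] (U * (W a * R * dag (W b)) * dag U) * dag (W2 b) = 0\<^sub>m d d"
      unfolding kraus_apply_def by simp
  qed
  also have "\<dots> = 0\<^sub>m d d" by (intro eq_matI) auto
  finally show ?case by simp
next
  case (Cons E Es)
  have E: "E \<in> carrier_mat d d" and Es: "\<And>E. E \<in> set Es \<Longrightarrow> E \<in> carrier_mat d d" using Cons.prems by auto
  define M where "M = (\<lambda>a b. U * (W a * R * dag (W b)) * dag U)"
  have Mc: "\<And>a b. M a b \<in> carrier_mat d d" unfolding M_def using U W R by auto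
  have Kc: "\<And>a b. kraus_apply d Es (M a b) \<in> carrier_mat d d" using kraus_carrier[OF Es Mc] by auto
  have EMc: "\<And>a b. E * M a b * dag E \<in> carrier_mat d d" using E Mc by auto
  define X where "X = (\<lambda>a. W2 a * E * U * W a)"
  have Xc: "\<And>a. X a \<in> carrier_mat d d" unfolding X_def
    by (rule mult_carrier_mat[OF mult_carrier_mat[OF mult_carrier_mat[OF W2 E] U] W])
  have split: "W2 a * kraus_apply d (E # Es) (M a b) * dag (W2 b)
     = X a * R * dag (X b) + W2 a * kraus_apply d Es (M a b) * dag (W2 b)" for a b
  proof -
    have "W2 a * kraus_apply d (E # Es) (M a b) * dag (W2 b)
        = W2 a * (E * M a b * dag E) * dag (W2 b) + W2 a * kraus_apply d Es (M a b) * dag (W2 b)"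
      unfolding kraus_Cons mult_add_distrib_mat[OF W2[of a] EMc[of a b] Kc[of a b]]
      by (rule add_mult_distrib_mat[of _ d d _ _ d]) (use W2 EMc Kc in \<open>auto intro: mult_carrier_mat[of _ d d _ d]\<close>)
    also have "W2 a * (E * M a b * dag E) * dag (W2 b) = X a * R * dag (X b)"
    proof -
      have "dag (X b) = dag (W b) * dag U * dag E * dag (W2 b)" unfolding X_def
        using W2 E U W by (simp add: dag_mult[of _ d d _ d] assoc_mult_mat[of _ d d _ d _ d] mult_carrier_mat[of _ d d _ d])
      thus ?thesis unfolding X_def M_def using W2 E U W R
        by (simp add: assoc_mult_mat[of _ d d _ d _ d] mult_carrier_mat[of _ d d _ d])
    qed
    finally show ?thesis .
  qed
  have "msum d S (\<lambda>a. msum d S (\<lambda>b. W2 a * kraus_apply d (E # Es) (M a b) * dag (W2 b)))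
     = msum d S (\<lambda>a. msum d S (\<lambda>b. X a * R * dag (X b)) + msum d S (\<lambda>b. W2 a * kraus_apply d Es (M a b) * dag (W2 b)))"
    unfolding split using Xc R W2 Kc by (intro msum_cong msum_add) (auto intro!: mult_carrier_mat[of _ d d _ d] dag_carrierI)
  also have "\<dots> = msum d S (\<lambda>a. msum d S (\<lambda>b. X a * R * dag (X b)))
     + msum d S (\<lambda>a. msum d S (\<lambda>b. W2 a * kraus_apply d Es (M a b) * dag (W2 b)))"
    by (rule msum_add) auto
  also have "msum d S (\<lambda>a. msum d S (\<lambda>b. X a * R * dag (X b))) = msum d S X * R * dag (msum d S X)"
    by (rule msum_bilinear[OF Xc R])
  finally show ?case using Cons.IH[OF Es] unfolding M_def X_def by simp
qed

lemma foldr_smult_sum: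
  fixes f :: "complex mat \<Rightarrow> complex"
  assumes M: "M \<in> carrier_mat d d"
  shows "foldr (\<lambda>E acc. f E \<cdot>\<^sub>m M + acc) Es (0\<^sub>m d d) = (\<Sum>E\<leftarrow>Es. f E) \<cdot>\<^sub>m M"
proof (induction Es)
  case Nil show ?case using M by (intro eq_matI) auto
next
  case (Cons E Es) thus ?case using M by (intro eq_matI) (auto simp: algebra_simps)
qed

lemma mtrace_comm: assumes A: "A \<in> carrier_mat d d" and B: "B \<in> carrier_mat d d"
  shows "mtrace (A * B) = mtrace (B * A)"
proof -
  have e1: "\<And>i. i < d \<Longrightarrow> (A * B) $$ (i,i) = (\<Sum>k<d. A $$ (i,k) * B $$ (k,i))"
    by (rule mult_index[OF A B])
  have e2: "\<And>i. i < d \<Longrightarrow> (B * A) $$ (i,i) = (\<Sum>k<d. B $$ (i,k) * A $$ (k,i))"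
    by (rule mult_index[OF B A])
  have "mtrace (A * B) = (\<Sum>i<d. \<Sum>k<d. A $$ (i,k) * B $$ (k,i))"
    unfolding mtrace_def using A by (intro sum.cong) (auto simp del: index_mult_mat(1) intro: e1)
  also have "\<dots> = (\<Sum>k<d. \<Sum>i<d. B $$ (k,i) * A $$ (i,k))"
    by (subst sum.swap) (simp add: mult.commute)
  also have "\<dots> = mtrace (B * A)"
    unfolding mtrace_def using B by (intro sum.cong) (auto simp del: index_mult_mat(1) intro: e2[symmetric])
  finally show ?thesis .
qed

lemma mtrace_smult: "A \<in> carrier_mat d d \<Longrightarrow> mtrace (c \<cdot>\<^sub>m A) = c * mtrace A"
  unfolding mtrace_def by (auto simp: sum_distrib_left intro!: sum.cong)

lemma circuit_formula:
  assumes d: "d = 2 ^ n" and m: "m = d + n" and U: "unitary_mat d U"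
    and rho: "\<rho> \<in> carrier_mat d d" and Es: "\<And>E. E \<in> set Es \<Longrightarrow> E \<in> carrier_mat d d"
  shows "pcs_postselected_unnorm d m (Vsel d) (\<lambda>k. U * dag (Vsel d k) * dag U) U Es \<rho>
     = ((1/2)^m * (1/2)^m * (\<Sum>E\<leftarrow>Es. (2^d * mtrace (dag U * E * U)) * cnj (2^d * mtrace (dag U * E * U))))
       \<cdot>\<^sub>m (U * \<rho> * dag U)"
proof -
  define V where "V = Vsel d"
  define C2 where "C2 = (\<lambda>k. U * dag (V k) * dag U)"
  define ks where "ks = [1..<Suc m]"
  define P where "P = Pow {1..m}"
  have setks: "set ks = {1..m}" unfolding ks_def by auto
  have lenks: "length ks = m" unfolding ks_def by simp
  have dks: "distinct ks" unfolding ks_def by simp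
  have Vc: "\<And>k. V k \<in> carrier_mat d d" unfolding V_def by simp
  have Uc: "U \<in> carrier_mat d d" "dag U \<in> carrier_mat d d" using U unitary_carrier by auto
  have C2c: "\<And>k. C2 k \<in> carrier_mat d d" unfolding C2_def using Uc Vc
    by (meson dag_carrierI mult_carrier_mat)
  define W where "W = (\<lambda>x. wprod d V ks x)"
  have Wc: "\<And>x. W x \<in> carrier_mat d d" unfolding W_def by (rule wprod_carrier) (use Vc in auto)
  define S0 where "S0 = fold pcs_hadamard ks (pcs_init d \<rho>)"
  have S0: "S0 = (\<lambda>x y. if (\<forall>k. x k \<longrightarrow> k \<in> {1..m}) \<and> (\<forall>k. y k \<longrightarrow> k \<in> {1..m})
     then ((1/2) ^ m) \<cdot>\<^sub>m \<rho> else 0\<^sub>m d d)"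
    unfolding S0_def H_init[OF rho dks] setks lenks ..
  have S0ok: "blk_ok d S0" unfolding blk_ok_def S0 using rho by auto
  define S1 where "S1 = fold (\<lambda>k. pcs_controlled d k (V k)) (rev ks) S0"
  have S1: "S1 = (\<lambda>x y. W x * S0 x y * dag (W y))"
    unfolding S1_def W_def by (rule ctl_fold[OF S0ok Vc])
  define S3 where "S3 = pcs_noise d Es (pcs_unitary U S1)"
  have S3: "S3 = (\<lambda>x y. kraus_apply d Es (U * (W x * S0 x y * dag (W y)) * dag U))"
    unfolding S3_def pcs_noise_def pcs_unitary_def S1 ..
  have S3ok: "blk_ok d S3" unfolding blk_ok_def S3
  proof (intro allI kraus_carrier[OF Es])
    fix x y
    have "S0 x y \<in> carrier_mat d d" using S0ok blk_okD by auto
    thus "U * (W x * S0 x y * dag (W y)) * dag U \<in> carrier_mat d d" using Uc Wc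
      by (meson dag_carrierI mult_carrier_mat)
  qed
  define W2 where "W2 = (\<lambda>x. U * dag (W x) * dag U)"
  have W2c: "\<And>x. W2 x \<in> carrier_mat d d" unfolding W2_def using Uc Wc by (meson dag_carrierI mult_carrier_mat)
  define S4 where "S4 = fold (\<lambda>k. pcs_controlled d k (C2 k)) ks S3"
  have S4: "S4 = (\<lambda>x y. W2 x * S3 x y * dag (W2 y))"
  proof -
    have "S4 = fold (\<lambda>k. pcs_controlled d k (C2 k)) (rev (rev ks)) S3" unfolding S4_def by simp
    also have "\<dots> = (\<lambda>x y. wprod d C2 (rev ks) x * S3 x y * dag (wprod d C2 (rev ks) y))"
      by (rule ctl_fold[OF S3ok C2c])
    also have "\<dots> = (\<lambda>x y. W2 x * S3 x y * dag (W2 y))"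
      unfolding C2_def W2_def W_def wprod_conj[OF U Vc] ..
    finally show ?thesis .
  qed
  have S4ok: "blk_ok d S4" unfolding blk_ok_def S4 using W2c S3ok blk_okD
    by (meson dag_carrierI mult_carrier_mat)
  define R where "R = ((1/2) ^ m) \<cdot>\<^sub>m \<rho>"
  define X where "X = U * \<rho> * dag U"
  have Xc: "X \<in> carrier_mat d d" unfolding X_def using Uc rho by auto
  have Rc: "R \<in> carrier_mat d d" unfolding R_def using rho by simp
  define gam where "gam = (\<lambda>E. 2^d * mtrace (dag U * E * U))"
  define K where "K = (\<lambda>E. msum d P (\<lambda>a. W2 (\<lambda>k. k \<in> a) * E * U * W (\<lambda>k. k \<in> a)))"
  have K: "K E = gam E \<cdot>\<^sub>m U" if E: "E \<in> carrier_mat d d" for E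
  proof -
    define E' where "E' = dag U * E * U"
    have E'c: "E' \<in> carrier_mat d d" unfolding E'_def using Uc E by auto
    have "K E = msum d P (\<lambda>a. U * (dag (W (\<lambda>k. k \<in> a)) * E' * W (\<lambda>k. k \<in> a)))"
      unfolding K_def W2_def E'_def using Uc E Wc
      by (intro msum_cong) (simp add: assoc_mult_mat[of _ d d _ d _ d] mult_carrier_mat[of _ d d _ d])
    also have "\<dots> = U * msum d P (\<lambda>a. dag (W (\<lambda>k. k \<in> a)) * E' * W (\<lambda>k. k \<in> a))"
      by (rule msum_mult_left[symmetric, OF Uc(1)]) (use Wc E'c in \<open>meson dag_carrierI mult_carrier_mat\<close>)
    also have "msum d P (\<lambda>a. dag (W (\<lambda>k. k \<in> a)) * E' * W (\<lambda>k. k \<in> a)) = twirl d V m E'"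
      unfolding twirl_def P_def W_def ks_def ..
    also have "\<dots> = (2^d * mtrace E') \<cdot>\<^sub>m 1\<^sub>m d"
      unfolding V_def m by (rule twirl_final[OF E'c d])
    also have "U * ((2^d * mtrace E') \<cdot>\<^sub>m 1\<^sub>m d) = gam E \<cdot>\<^sub>m U"
      unfolding gam_def E'_def[symmetric] using Uc by (simp add: mult_smult_distrib[of _ d d _ d])
    finally show ?thesis .
  qed
  have KK: "K E * R * dag (K E) = (gam E * cnj (gam E) * (1/2)^m) \<cdot>\<^sub>m X"
    if E: "E \<in> carrier_mat d d" for E
    unfolding K[OF E] R_def X_def using Uc rho
    by (simp add: dag_smult mult_smult_distrib[of _ d d _ d] mult_smult_assoc_mat[of _ d d _ d] smult_smult_mat
      mult_carrier_mat[of _ d d _ d] algebra_simps)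
  have main: "msum d P (\<lambda>a. msum d P (\<lambda>b. S4 (\<lambda>k. k \<in> a) (\<lambda>k. k \<in> b)))
     = ((\<Sum>E\<leftarrow>Es. gam E * cnj (gam E)) * (1/2)^m) \<cdot>\<^sub>m X"
  proof -
    have "msum d P (\<lambda>a. msum d P (\<lambda>b. S4 (\<lambda>k. k \<in> a) (\<lambda>k. k \<in> b)))
      = msum d P (\<lambda>a. msum d P (\<lambda>b. W2 (\<lambda>k. k \<in> a) * kraus_apply d Es (U * (W (\<lambda>k. k \<in> a) * R * dag (W (\<lambda>k. k \<in> b))) * dag U)
          * dag (W2 (\<lambda>k. k \<in> b))))"
      unfolding S4 S3 R_def by (intro msum_cong) (auto simp: S0 P_def)
    also have "\<dots> = foldr (\<lambda>E acc. K E * R * dag (K E) + acc) Es (0\<^sub>m d d)"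
      unfolding K_def by (rule kraus_msum[OF W2c Wc Uc(1) Rc Es])
    also have "\<dots> = foldr (\<lambda>E acc. (gam E * cnj (gam E) * (1/2)^m) \<cdot>\<^sub>m X + acc) Es (0\<^sub>m d d)"
      using Es by (induction Es) (auto simp: KK)
    also have "\<dots> = (\<Sum>E\<leftarrow>Es. gam E * cnj (gam E) * (1/2)^m) \<cdot>\<^sub>m X"
      by (rule foldr_smult_sum[OF Xc])
    also have "(\<Sum>E\<leftarrow>Es. gam E * cnj (gam E) * (1/2)^m) = (\<Sum>E\<leftarrow>Es. gam E * cnj (gam E)) * (1/2)^m"
      by (simp add: sum_list_mult_const)
    finally show ?thesis .
  qed
  have unnorm: "pcs_postselected_unnorm d m V C2 U Es \<rho> = fold pcs_hadamard ks S4 (\<lambda>_. False) (\<lambda>_. False)"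
    unfolding pcs_postselected_unnorm_def pcs_circuit_def pcs_hadamard_all_def S4_def S3_def S1_def S0_def ks_def
    by simp
  have UNc: "pcs_postselected_unnorm d m V C2 U Es \<rho> \<in> carrier_mat d d"
    unfolding unnorm by (rule blk_okD[OF fold_hadamard_ok[OF S4ok]])
  have "pcs_postselected_unnorm d m V C2 U Es \<rho>
     = ((1/2)^m * (1/2)^m * (\<Sum>E\<leftarrow>Es. gam E * cnj (gam E))) \<cdot>\<^sub>m X"
  proof (rule eq_matI)
    fix i j assume "i < dim_row (((1/2)^m * (1/2)^m * (\<Sum>E\<leftarrow>Es. gam E * cnj (gam E))) \<cdot>\<^sub>m X)"
      "j < dim_col (((1/2)^m * (1/2)^m * (\<Sum>E\<leftarrow>Es. gam E * cnj (gam E))) \<cdot>\<^sub>m X)"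
    hence ij: "i < d" "j < d" using Xc by auto
    have "pcs_postselected_unnorm d m V C2 U Es \<rho> $$ (i,j) = (1/2) ^ m *
       (\<Sum>a\<in>P. \<Sum>b\<in>P. S4 (\<lambda>k. k \<in> a) (\<lambda>k. k \<in> b) $$ (i,j))"
      unfolding unnorm using H_final[OF dks S4ok _ ij, of "\<lambda>_. False" "\<lambda>_. False"]
      by (simp add: setks lenks P_def)
    also have "(\<Sum>a\<in>P. \<Sum>b\<in>P. S4 (\<lambda>k. k \<in> a) (\<lambda>k. k \<in> b) $$ (i,j))
        = msum d P (\<lambda>a. msum d P (\<lambda>b. S4 (\<lambda>k. k \<in> a) (\<lambda>k. k \<in> b))) $$ (i,j)"
      using ij by simp
    also have "\<dots> = ((\<Sum>E\<leftarrow>Es. gam E * cnj (gam E)) * (1/2)^m) * X $$ (i,j)"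
      unfolding main using ij Xc by simp
    finally show "pcs_postselected_unnorm d m V C2 U Es \<rho> $$ (i,j)
      = (((1/2)^m * (1/2)^m * (\<Sum>E\<leftarrow>Es. gam E * cnj (gam E))) \<cdot>\<^sub>m X) $$ (i,j)"
      using ij Xc by simp
  qed (use UNc Xc in auto)
  thus ?thesis unfolding V_def C2_def gam_def X_def .
qed

lemma sum_list_norm: "(\<Sum>E\<leftarrow>Es. (g E :: complex) * cnj (g E)) = complex_of_real (\<Sum>E\<leftarrow>Es. (cmod (g E))^2)"
proof (induction Es)
  case (Cons a Es)
  have "g a * cnj (g a) = complex_of_real ((cmod (g a))^2)" by (metis complex_norm_square)
  thus ?case using Cons by simp
qed simp

theorem theorem1:
  fixes n :: nat and U \<rho> :: "complex mat" and Es :: "complex mat list"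
  assumes "n \<ge> 1"
    and "unitary_mat (2 ^ n) U"
    and "density_mat (2 ^ n) \<rho>"
    and "\<forall>E \<in> set Es. E \<in> carrier_mat (2 ^ n) (2 ^ n)"
  shows "\<exists>m C1 C2. m \<ge> 1 \<and>
     (\<forall>k \<in> {1..m}. unitary_mat (2 ^ n) (C1 k) \<and> unitary_mat (2 ^ n) (C2 k) \<and> C2 k * U * C1 k = U) \<and>
     (pcs_success_prob (2 ^ n) m C1 C2 U Es \<rho> \<noteq> 0 \<longrightarrow>
        fidelity (pcs_postselected (2 ^ n) m C1 C2 U Es \<rho>) (U * \<rho> * dag U) = 1)"
proof -
  define d where "d = (2::nat) ^ n"
  define m where "m = d + n"
  define C1 where "C1 = Vsel d"
  define C2 where "C2 = (\<lambda>k. U * dag (Vsel d k) * dag U)"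
  have d0: "d > 0" unfolding d_def by simp
  have U: "unitary_mat d U" using assms(2) unfolding d_def .
  have Uc: "U \<in> carrier_mat d d" "dag U \<in> carrier_mat d d" using U unitary_carrier by auto
  have UU: "dag U * U = 1\<^sub>m d" "U * dag U = 1\<^sub>m d" using U unfolding unitary_mat_def by auto
  have rho: "density_mat d \<rho>" using assms(3) unfolding d_def .
  have rps: "psd_mat d \<rho>" and rtr: "mtrace \<rho> = 1" using rho unfolding density_mat_def by auto
  have rc: "\<rho> \<in> carrier_mat d d" using rps unfolding psd_mat_def by auto
  have Es: "\<And>E. E \<in> set Es \<Longrightarrow> E \<in> carrier_mat d d" using assms(4) unfolding d_def by auto
  have m1: "m \<ge> 1" unfolding m_def using d0 by simp
  have checks: "unitary_mat d (C1 k) \<and> unitary_mat d (C2 k) \<and> C2 k * U * C1 k = U" for k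
  proof -
    have V: "unitary_mat d (Vsel d k)" by (rule Vsel_unitary[OF d0])
    have Vc: "Vsel d k \<in> carrier_mat d d" "dag (Vsel d k) \<in> carrier_mat d d" by auto
    have VV: "dag (Vsel d k) * Vsel d k = 1\<^sub>m d" using V unfolding unitary_mat_def by auto
    have u2: "unitary_mat d (C2 k)" unfolding C2_def
      by (intro unitary_mult unitary_dag U V)
    have "C2 k * U * C1 k = U * dag (Vsel d k) * (dag U * U) * Vsel d k"
      unfolding C2_def C1_def using Uc Vc
      by (simp add: assoc_mult_mat[of _ d d _ d _ d] mult_carrier_mat[of _ d d _ d])
    also have "\<dots> = U * (dag (Vsel d k) * Vsel d k)"
      unfolding UU using Uc Vc by (simp add: assoc_mult_mat[of _ d d _ d _ d] mult_carrier_mat[of _ d d _ d] left_mult_one_mat[of _ d d])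
    also have "\<dots> = U" unfolding VV using Uc by simp
    finally show ?thesis using V u2 unfolding C1_def by simp
  qed
  define X where "X = U * \<rho> * dag U"
  have Xc: "X \<in> carrier_mat d d" unfolding X_def using Uc rc by auto
  have Xtr: "mtrace X = 1"
  proof -
    have "mtrace X = mtrace (dag U * (U * \<rho>))"
      unfolding X_def by (rule mtrace_comm) (use Uc rc in auto)
    also have "dag U * (U * \<rho>) = \<rho>" using Uc rc UU
      by (simp add: assoc_mult_mat[of _ d d _ d _ d, symmetric])
    finally show ?thesis using rtr by simp
  qed
  have Xd: "density_mat d X" unfolding density_mat_def X_def
    using psd_conj[OF rps Uc(1)] Xtr unfolding X_def by simp
  define r where "r = (1/2)^m * (1/2)^m * (\<Sum>E\<leftarrow>Es. (cmod (2^d * mtrace (dag U * E * U)))^2)"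
  have un: "pcs_postselected_unnorm d m C1 C2 U Es \<rho> = complex_of_real r \<cdot>\<^sub>m X"
  proof -
    have "pcs_postselected_unnorm d m C1 C2 U Es \<rho> = ((1/2)^m * (1/2)^m * (\<Sum>E\<leftarrow>Es. (2^d * mtrace (dag U * E * U)) * cnj (2^d * mtrace (dag U * E * U))))
       \<cdot>\<^sub>m X"
      unfolding C1_def C2_def X_def by (rule circuit_formula[OF d_def m_def U rc Es])
    thus ?thesis unfolding sum_list_norm r_def by simp
  qed
  have pr: "pcs_success_prob d m C1 C2 U Es \<rho> = r"
    unfolding pcs_success_prob_def un mtrace_smult[OF Xc] Xtr by simp
  have fid: "fidelity (pcs_postselected d m C1 C2 U Es \<rho>) X = 1"
    if "pcs_success_prob d m C1 C2 U Es \<rho> \<noteq> 0"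
  proof -
    have r0: "r \<noteq> 0" using that pr by simp
    have "pcs_postselected d m C1 C2 U Es \<rho> = X"
      unfolding pcs_postselected_def pr un smult_smult_mat using r0 Xc by (simp, intro eq_matI, auto)
    thus ?thesis using fidelity_self[OF Xd] by simp
  qed
  show ?thesis
    apply (rule exI[of _ m], rule exI[of _ C1], rule exI[of _ C2])
    using m1 checks fid unfolding d_def X_def by auto
qed


end
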